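(* Let $\varphi$ be an Orlicz $N$-function with Young–Fenchel transform $\psi$ and let $q_\varphi$ be the generalized inverse of the density of $\varphi$. Let $\{X_{k,n}, k\ge1,n\ge1\}$ be a double array of $\varphi$-subgaussian random variables, and let $g$ be a positive non-decreasing function such that for all $k,n\ge1$ $$\tau_\varphi(X_{k,n})\le g(\ln(kn)).$$ Set $a_{m,j}=g(\ln(mj))\,\psi^{-1}(\ln(mj))$, $Y_{m,j}=\max_{1\le k\le m,1\le n\le j}X_{k,n}-a_{m,j}$ and $Y^+_{m,j}=\max(Y_{m,j},0)$. Suppose there exists $\varepsilon_0>0$ such that for every $\varepsilon\in(0,\varepsilon_0]$ $$\int_0^\infty \psi(x)\,q_\varphi(x)\exp\left(-\frac{\varepsilon\, q_\varphi(x)}{g(\psi(x)+\ln 2)}\right)dx<+\infty.$$ Then $\lim_{m\vee j\to\infty}Y^+_{m,j}=0$ almost surely.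
   Context: An Orlicz $N$-function is a continuous even convex function $\varphi:\mathbb R\to\mathbb R$ with $\varphi(0)=0$, increasing on $(0,\infty)$, with $\varphi(x)/x\to0$ as $x\to0$ and $\varphi(x)/x\to+\infty$ as $x\to+\infty$. It can be written $\varphi(x)=\int_0^{|x|}p_\varphi(t)\,dt$ with non-decreasing density $p_\varphi$; its generalized inverse is $q_\varphi(t)=\sup\{u\ge0:p_\varphi(u)\le t\}$. The Young–Fenchel transform is $\psi(x)=\sup_{y\in\mathbb R}(xy-\varphi(y))$; it is an Orlicz $N$-function with $\psi(x)=\int_0^{|x|}q_\varphi(t)\,dt$, and $\psi^{-1}$ denotes the inverse of $\psi$ restricted to $[0,\infty)$. A random variable $X$ is $\varphi$-subgaussian if $EX=0$ and there is a finite $a>0$ with $E\exp(tX)\le\exp(\varphi(at))$ for all $t\in\mathbb R$; its $\varphi$-subgaussian norm is $\tau_\varphi(X)=\inf\{a>0:E\exp(tX)\le\exp(\varphi(at))\ \forall t\in\mathbb R\}$. For a double array $b_{m,j}$, $\lim_{m\vee j\to\infty}b_{m,j}=b$ means: for every $\varepsilon>0$ there is $N$ such that $|b_{m,j}-b|<\varepsilon$ whenever $\max(m,j)\ge N$. *)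

theory Defs
  imports "HOL-Probability.Probability"
begin

definition orlicz_N :: "(real \<Rightarrow> real) \<Rightarrow> bool" where
  "orlicz_N \<phi> \<longleftrightarrow>
     continuous_on UNIV \<phi> \<and> (\<forall>x. \<phi> (- x) = \<phi> x) \<and> convex_on UNIV \<phi> \<and> \<phi> 0 = 0 \<and>
     strict_mono_on {0..} \<phi> \<and>
     ((\<lambda>x. \<phi> x / x) \<longlongrightarrow> 0) (at_right 0) \<and>
     filterlim (\<lambda>x. \<phi> x / x) at_top at_top"

text \<open>Density of phi: its right derivative (phi(x) = integral of it from 0 to |x|).\<close>
definition orlicz_density :: "(real \<Rightarrow> real) \<Rightarrow> real \<Rightarrow> real" where
  "orlicz_density \<phi> t = Lim (at_right 0) (\<lambda>h. (\<phi> (t + h) - \<phi> t) / h)"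

definition orlicz_q :: "(real \<Rightarrow> real) \<Rightarrow> real \<Rightarrow> real" where
  "orlicz_q \<phi> t = Sup {u. u \<ge> 0 \<and> orlicz_density \<phi> u \<le> t}"

definition young_fenchel :: "(real \<Rightarrow> real) \<Rightarrow> real \<Rightarrow> real" where
  "young_fenchel \<phi> x = (SUP y. x * y - \<phi> y)"

definition inv_pos :: "(real \<Rightarrow> real) \<Rightarrow> real \<Rightarrow> real" where
  "inv_pos \<psi> y = (THE x. x \<ge> 0 \<and> \<psi> x = y)"

definition mgf_bound :: "'a measure \<Rightarrow> (real \<Rightarrow> real) \<Rightarrow> ('a \<Rightarrow> real) \<Rightarrow> real \<Rightarrow> bool" where
  "mgf_bound M \<phi> X a \<longleftrightarrow>
     (\<forall>t. integrable M (\<lambda>\<omega>. exp (t * X \<omega>)) \<and>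
          (\<integral>\<omega>. exp (t * X \<omega>) \<partial>M) \<le> exp (\<phi> (a * t)))"

definition phi_subgaussian :: "'a measure \<Rightarrow> (real \<Rightarrow> real) \<Rightarrow> ('a \<Rightarrow> real) \<Rightarrow> bool" where
  "phi_subgaussian M \<phi> X \<longleftrightarrow>
     X \<in> borel_measurable M \<and> integrable M X \<and> (\<integral>\<omega>. X \<omega> \<partial>M) = 0 \<and>
     (\<exists>a>0. mgf_bound M \<phi> X a)"

definition tau_phi :: "'a measure \<Rightarrow> (real \<Rightarrow> real) \<Rightarrow> ('a \<Rightarrow> real) \<Rightarrow> real" where
  "tau_phi M \<phi> X = Inf {a. a > 0 \<and> mgf_bound M \<phi> X a}"

end

theory Submission
  imports Defs
begin

lemma oN_cont: "orlicz_N \<phi> \<Longrightarrow> continuous_on UNIV \<phi>" by (simp add: orlicz_N_def)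
lemma oN_even: "orlicz_N \<phi> \<Longrightarrow> \<phi> (- x) = \<phi> x" by (simp add: orlicz_N_def)
lemma oN_convex: "orlicz_N \<phi> \<Longrightarrow> convex_on UNIV \<phi>" by (simp add: orlicz_N_def)
lemma oN_zero: "orlicz_N \<phi> \<Longrightarrow> \<phi> 0 = 0" by (simp add: orlicz_N_def)
lemma oN_smono: "orlicz_N \<phi> \<Longrightarrow> strict_mono_on {0..} \<phi>" by (simp add: orlicz_N_def)
lemma oN_lim0: "orlicz_N \<phi> \<Longrightarrow> ((\<lambda>x. \<phi> x / x) \<longlongrightarrow> 0) (at_right 0)" by (simp add: orlicz_N_def)
lemma oN_liminf: "orlicz_N \<phi> \<Longrightarrow> filterlim (\<lambda>x. \<phi> x / x) at_top at_top" by (simp add: orlicz_N_def)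

lemma oN_abs: assumes "orlicz_N \<phi>" shows "\<phi> x = \<phi> \<bar>x\<bar>"
  using oN_even[OF assms, of x] by (cases "x \<ge> 0") auto

lemma oN_mono_abs: assumes "orlicz_N \<phi>" "\<bar>x\<bar> \<le> \<bar>y\<bar>" shows "\<phi> x \<le> \<phi> y"
proof -
  have "\<phi> \<bar>x\<bar> \<le> \<phi> \<bar>y\<bar>"
    by (rule strict_mono_on_leD[OF oN_smono[OF assms(1)]]) (use assms(2) in simp_all)
  then show ?thesis using oN_abs[OF assms(1), of x] oN_abs[OF assms(1), of y] by simp
qed

lemma oN_nonneg: assumes "orlicz_N \<phi>" shows "0 \<le> \<phi> x"
  using oN_mono_abs[OF assms, of 0 x] oN_zero[OF assms] by simp

section \<open>Right derivative\<close>

lemma slope_flip: "((a::real) - b) / (t - (t + h)) = (b - a) / h"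
  by (cases "h = 0") (simp_all add: field_simps)

lemma slope_flip2: "((a::real) - b) / (z - t) = (b - a) / (t - z)"
  by (cases "z = t") (simp_all add: field_simps)

lemma oN_slope_mono:
  assumes "orlicz_N \<phi>" "0 < h1" "h1 \<le> h2"
  shows "(\<phi> (t + h1) - \<phi> t) / h1 \<le> (\<phi> (t + h2) - \<phi> t) / h2"
proof (cases "h1 = h2")
  case False
  then have lt: "h1 < h2" using assms by simp
  have "(\<phi> t - \<phi> (t + h1)) / (t - (t + h1)) \<le> (\<phi> t - \<phi> (t + h2)) / (t - (t + h2))"
    by (rule convex_on_slope_le(1)[OF oN_convex[OF assms(1)]]) (use lt assms(2) in auto)
  then show ?thesis unfolding slope_flip .
qed simp

lemma oN_slope_lower:
  assumes "orlicz_N \<phi>" "z < t" "0 < h"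
  shows "(\<phi> t - \<phi> z) / (t - z) \<le> (\<phi> (t + h) - \<phi> t) / h"
proof -
  have c: "convex_on UNIV \<phi>" using oN_convex[OF assms(1)] .
  have 1: "(\<phi> z - \<phi> t) / (z - t) \<le> (\<phi> z - \<phi> (t + h)) / (z - (t + h))"
    by (rule convex_on_slope_le(1)[OF c]) (use assms in auto)
  have 2: "(\<phi> z - \<phi> (t + h)) / (z - (t + h)) \<le> (\<phi> t - \<phi> (t + h)) / (t - (t + h))"
    by (rule convex_on_slope_le(2)[OF c]) (use assms in auto)
  show ?thesis using 1 2 unfolding slope_flip slope_flip2 by linarith
qed

lemma oN_density_eq:
  assumes "orlicz_N \<phi>"
  shows "orlicz_density \<phi> t = Inf ((\<lambda>h. (\<phi> (t + h) - \<phi> t) / h) ` {0<..})"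
proof -
  let ?D = "\<lambda>h. (\<phi> (t + h) - \<phi> t) / h"
  have K: "\<phi> t - \<phi> (t - 1) \<le> ?D a" if "0 < a" for a
    using oN_slope_lower[OF assms, of "t - 1" t a] that by simp
  have "(?D \<longlongrightarrow> Inf (?D ` ({0<..} \<inter> UNIV))) (at 0 within ({0<..} \<inter> UNIV))"
    by (rule Lim_right_bound[where K = "\<phi> t - \<phi> (t - 1)"])
       (simp add: oN_slope_mono[OF assms], simp add: K)
  then have "(?D \<longlongrightarrow> Inf (?D ` {0<..})) (at_right 0)"
    by simp
  moreover have "\<not> trivial_limit (at_right (0::real))" by simp
  ultimately show ?thesis unfolding orlicz_density_def
    by (rule tendsto_Lim[rotated])
qed

lemma oN_density_upper:
  assumes "orlicz_N \<phi>" "0 < h"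
  shows "orlicz_density \<phi> t \<le> (\<phi> (t + h) - \<phi> t) / h"
  unfolding oN_density_eq[OF assms(1)]
proof (rule cInf_lower)
  show "(\<phi> (t + h) - \<phi> t) / h \<in> (\<lambda>h. (\<phi> (t + h) - \<phi> t) / h) ` {0<..}"
    using assms(2) by simp
  show "bdd_below ((\<lambda>h. (\<phi> (t + h) - \<phi> t) / h) ` {0<..})"
    unfolding bdd_below_def
  proof (intro exI ballI)
    fix v assume "v \<in> (\<lambda>h. (\<phi> (t + h) - \<phi> t) / h) ` {0<..}"
    then obtain a where "0 < a" "v = (\<phi> (t + a) - \<phi> t) / a" by auto
    then show "\<phi> t - \<phi> (t - 1) \<le> v"
      using oN_slope_lower[OF assms(1), of "t - 1" t a] by simp
  qed
qed

lemma oN_density_lower: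
  assumes "orlicz_N \<phi>" "z < t"
  shows "(\<phi> t - \<phi> z) / (t - z) \<le> orlicz_density \<phi> t"
  unfolding oN_density_eq[OF assms(1)]
proof (rule cInf_greatest)
  show "(\<lambda>h. (\<phi> (t + h) - \<phi> t) / h) ` {0<..} \<noteq> {}" by simp
  fix v assume "v \<in> (\<lambda>h. (\<phi> (t + h) - \<phi> t) / h) ` {0<..}"
  then obtain a where "0 < a" "v = (\<phi> (t + a) - \<phi> t) / a" by auto
  then show "(\<phi> t - \<phi> z) / (t - z) \<le> v"
    using oN_slope_lower[OF assms, of a] by simp
qed

lemma oN_density_zero:
  assumes "orlicz_N \<phi>"
  shows "orlicz_density \<phi> 0 = 0"
proof -
  have "((\<lambda>h. (\<phi> (0 + h) - \<phi> 0) / h) \<longlongrightarrow> 0) (at_right 0)"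
    using oN_lim0[OF assms] oN_zero[OF assms] by simp
  moreover have "\<not> trivial_limit (at_right (0::real))" by simp
  ultimately show ?thesis unfolding orlicz_density_def
    by (rule tendsto_Lim[rotated])
qed

section \<open>Young-Fenchel transform\<close>

lemma oN_large:
  assumes "orlicz_N \<phi>"
  shows "\<exists>R>0. \<forall>y. R \<le> \<bar>y\<bar> \<longrightarrow> Z * \<bar>y\<bar> \<le> \<phi> y"
proof -
  have "\<forall>\<^sub>F x in at_top. Z \<le> \<phi> x / x"
    using oN_liminf[OF assms] by (simp add: filterlim_at_top)
  then obtain N where N: "\<And>x. x \<ge> N \<Longrightarrow> Z \<le> \<phi> x / x"
    by (auto simp: eventually_at_top_linorder)
  show ?thesis
  proof (intro exI[of _ "max N 1"] conjI allI impI)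
    fix y :: real assume y: "max N 1 \<le> \<bar>y\<bar>"
    then have "N \<le> \<bar>y\<bar>" by simp
    then have "Z \<le> \<phi> \<bar>y\<bar> / \<bar>y\<bar>" by (rule N)
    moreover have "1 \<le> \<bar>y\<bar>" using y by simp
    then have "\<bar>y\<bar> > 0" by linarith
    ultimately have "Z * \<bar>y\<bar> \<le> \<phi> \<bar>y\<bar>" by (simp add: le_divide_eq)
    then show "Z * \<bar>y\<bar> \<le> \<phi> y" using oN_abs[OF assms, of y] by simp
  qed simp
qed

lemma yf_bdd:
  assumes "orlicz_N \<phi>"
  shows "bdd_above (range (\<lambda>y. x * y - \<phi> y))"
proof -
  obtain R where R: "R > 0" "\<And>y. R \<le> \<bar>y\<bar> \<Longrightarrow> (\<bar>x\<bar> + 1) * \<bar>y\<bar> \<le> \<phi> y"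
    using oN_large[OF assms, of "\<bar>x\<bar> + 1"] by auto
  have "x * y - \<phi> y \<le> \<bar>x\<bar> * R" for y
  proof (cases "R \<le> \<bar>y\<bar>")
    case True
    have "x * y \<le> \<bar>x\<bar> * \<bar>y\<bar>" by (metis abs_ge_self abs_mult)
    then show ?thesis using R(2)[OF True] R(1) by (smt (verit) mult_nonneg_nonneg abs_ge_zero distrib_right)
  next
    case False
    have "x * y \<le> \<bar>x\<bar> * \<bar>y\<bar>" by (metis abs_ge_self abs_mult)
    also have "\<dots> \<le> \<bar>x\<bar> * R" using False by (intro mult_left_mono) auto
    finally show ?thesis using oN_nonneg[OF assms, of y] by linarith
  qed
  then show ?thesis by (auto intro!: bdd_aboveI2)
qed

lemma yf_ge:
  assumes "orlicz_N \<phi>"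
  shows "x * y - \<phi> y \<le> young_fenchel \<phi> x"
  unfolding young_fenchel_def by (rule cSUP_upper[OF _ yf_bdd[OF assms]]) simp

lemma yf_le:
  assumes "\<And>y. x * y - \<phi> y \<le> c"
  shows "young_fenchel \<phi> x \<le> c"
  unfolding young_fenchel_def by (rule cSUP_least) (use assms in auto)

lemma yf_nonneg:
  assumes "orlicz_N \<phi>"
  shows "0 \<le> young_fenchel \<phi> x"
  using yf_ge[OF assms, of x 0] oN_zero[OF assms] by simp

lemma yf_zero:
  assumes "orlicz_N \<phi>"
  shows "young_fenchel \<phi> 0 = 0"
proof -
  have "young_fenchel \<phi> 0 \<le> 0"
    by (rule yf_le) (use oN_nonneg[OF assms] in simp)
  then show ?thesis using yf_nonneg[OF assms, of 0] by simp
qed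

lemma yf_lin:
  assumes "orlicz_N \<phi>"
  shows "x - \<phi> 1 \<le> young_fenchel \<phi> x"
  using yf_ge[OF assms, of x 1] by simp

section \<open>The generalized inverse q\<close>

lemma Q_zero:
  assumes "orlicz_N \<phi>" "0 \<le> s"
  shows "0 \<in> {u. u \<ge> 0 \<and> orlicz_density \<phi> u \<le> s}"
  using oN_density_zero[OF assms(1)] assms(2) by simp

lemma Q_bdd:
  assumes "orlicz_N \<phi>"
  shows "bdd_above {u. u \<ge> 0 \<and> orlicz_density \<phi> u \<le> s}"
proof -
  obtain R where R: "R > 0" "\<And>y. R \<le> \<bar>y\<bar> \<Longrightarrow> (\<bar>s\<bar> + 1) * \<bar>y\<bar> \<le> \<phi> y"
    using oN_large[OF assms, of "\<bar>s\<bar> + 1"] by auto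
  have "u \<le> R" if u: "u \<ge> 0" "orlicz_density \<phi> u \<le> s" for u
  proof (rule ccontr)
    assume "\<not> u \<le> R"
    then have uR: "u > R" by simp
    then have "(\<bar>s\<bar> + 1) * u \<le> \<phi> u" using R(2)[of u] u R(1) by simp
    moreover have "(\<phi> u - \<phi> 0) / (u - 0) \<le> orlicz_density \<phi> u"
      by (rule oN_density_lower[OF assms]) (use uR R in simp)
    ultimately have "(\<bar>s\<bar> + 1) * u / u \<le> s"
      using oN_zero[OF assms] u(2) by (smt (verit) divide_right_mono uR R(1))
    then show False using uR R(1) by simp
  qed
  then show ?thesis by (auto intro!: bdd_aboveI)
qed

lemma q_nonneg:
  assumes "orlicz_N \<phi>" "0 \<le> s"
  shows "0 \<le> orlicz_q \<phi> s"
  unfolding orlicz_q_def by (rule cSup_upper[OF Q_zero[OF assms] Q_bdd[OF assms(1)]])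

lemma yf_key1:
  assumes "orlicz_N \<phi>" "0 \<le> s" "0 \<le> \<delta>"
  shows "young_fenchel \<phi> s + \<delta> * orlicz_q \<phi> s \<le> young_fenchel \<phi> (s + \<delta>)"
proof -
  let ?\<psi> = "young_fenchel \<phi>"
  have step: "?\<psi> s \<le> ?\<psi> (s + \<delta>) - \<delta> * u" if u: "u \<ge> 0" "orlicz_density \<phi> u \<le> s" for u
  proof (rule yf_le)
    fix y
    show "s * y - \<phi> y \<le> ?\<psi> (s + \<delta>) - \<delta> * u"
    proof (cases "y \<le> u")
      case True
      have "\<phi> u - \<phi> y \<le> s * (u - y)"
      proof (cases "y = u")
        case False
        then have yu: "y < u" using True by simp
        have "(\<phi> u - \<phi> y) / (u - y) \<le> s"
          using oN_density_lower[OF assms(1) yu] u(2) by simp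
        then show ?thesis using yu by (simp add: divide_le_eq mult.commute)
      qed simp
      moreover have "(s + \<delta>) * u - \<phi> u \<le> ?\<psi> (s + \<delta>)" by (rule yf_ge[OF assms(1)])
      ultimately show ?thesis by (simp add: algebra_simps)
    next
      case False
      have "(s + \<delta>) * y - \<phi> y \<le> ?\<psi> (s + \<delta>)" by (rule yf_ge[OF assms(1)])
      moreover have "\<delta> * u \<le> \<delta> * y" using False assms(3) by (intro mult_left_mono) auto
      ultimately show ?thesis by (simp add: algebra_simps)
    qed
  qed
  show ?thesis
  proof (cases "\<delta> = 0")
    case True then show ?thesis by simp
  next
    case False
    then have dpos: "\<delta> > 0" using assms(3) by simp
    have "orlicz_q \<phi> s \<le> (?\<psi> (s + \<delta>) - ?\<psi> s) / \<delta>"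
      unfolding orlicz_q_def
    proof (rule cSup_least)
      show "{u. u \<ge> 0 \<and> orlicz_density \<phi> u \<le> s} \<noteq> {}" using Q_zero[OF assms(1,2)] by blast
      fix u assume "u \<in> {u. u \<ge> 0 \<and> orlicz_density \<phi> u \<le> s}"
      then have "?\<psi> s \<le> ?\<psi> (s + \<delta>) - \<delta> * u" using step by simp
      then show "u \<le> (?\<psi> (s + \<delta>) - ?\<psi> s) / \<delta>" using dpos by (simp add: le_divide_eq mult.commute)
    qed
    then show ?thesis using dpos by (simp add: le_divide_eq mult.commute)
  qed
qed

lemma yf_key2:
  assumes "orlicz_N \<phi>" "0 \<le> a" "a \<le> b"
  shows "young_fenchel \<phi> b \<le> young_fenchel \<phi> a + (b - a) * orlicz_q \<phi> b"
proof -
  let ?\<psi> = "young_fenchel \<phi>"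
  let ?Q = "{u. u \<ge> 0 \<and> orlicz_density \<phi> u \<le> b}"
  have b0: "0 \<le> b" using assms by simp
  have w: "?\<psi> b \<le> ?\<psi> a + (b - a) * w" if w: "orlicz_q \<phi> b < w" for w
  proof -
    have w0: "w \<ge> 0" using q_nonneg[OF assms(1) b0] w by simp
    have "w \<notin> ?Q"
    proof
      assume "w \<in> ?Q"
      then have "w \<le> orlicz_q \<phi> b" unfolding orlicz_q_def by (rule cSup_upper[OF _ Q_bdd[OF assms(1)]])
      then show False using w by simp
    qed
    then have pw: "orlicz_density \<phi> w > b" using w0 by auto
    have le_w: "b * y - \<phi> y \<le> ?\<psi> a + (b - a) * w" if "y \<le> w" for y
    proof -
      have "a * y - \<phi> y \<le> ?\<psi> a" by (rule yf_ge[OF assms(1)])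
      moreover have "(b - a) * y \<le> (b - a) * w" using that assms by (intro mult_left_mono) auto
      ultimately show ?thesis by (simp add: algebra_simps)
    qed
    show ?thesis
    proof (rule yf_le)
      fix y
      show "b * y - \<phi> y \<le> ?\<psi> a + (b - a) * w"
      proof (cases "y \<le> w")
        case True then show ?thesis by (rule le_w)
      next
        case False
        then have h: "0 < y - w" by simp
        have "orlicz_density \<phi> w \<le> (\<phi> (w + (y - w)) - \<phi> w) / (y - w)"
          by (rule oN_density_upper[OF assms(1) h])
        then have "b < (\<phi> y - \<phi> w) / (y - w)" using pw by simp
        then have "b * (y - w) < \<phi> y - \<phi> w" using h by (simp add: less_divide_eq)
        then have "b * y - \<phi> y < b * w - \<phi> w" by (simp add: algebra_simps)
        then show ?thesis using le_w[of w] by simp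
      qed
    qed
  qed
  show ?thesis
  proof (cases "a = b")
    case True then show ?thesis by simp
  next
    case False
    then have ab: "b - a > 0" using assms by simp
    have "(?\<psi> b - ?\<psi> a) / (b - a) \<le> orlicz_q \<phi> b"
    proof (rule dense_ge)
      fix w assume "orlicz_q \<phi> b < w"
      then have "?\<psi> b \<le> ?\<psi> a + (b - a) * w" by (rule w)
      then have "?\<psi> b - ?\<psi> a \<le> (b - a) * w" by simp
      then show "(?\<psi> b - ?\<psi> a) / (b - a) \<le> w" using ab by (simp add: divide_le_eq mult.commute)
    qed
    then show ?thesis using ab by (simp add: divide_le_eq mult.commute)
  qed
qed

lemma q_mono:
  assumes "orlicz_N \<phi>" "0 \<le> a" "a \<le> b"
  shows "orlicz_q \<phi> a \<le> orlicz_q \<phi> b"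
proof (cases "a = b")
  case False
  then have ab: "b - a > 0" using assms by simp
  have "young_fenchel \<phi> a + (b - a) * orlicz_q \<phi> a \<le> young_fenchel \<phi> (a + (b - a))"
    by (rule yf_key1[OF assms(1,2)]) (use ab in simp)
  then have "(b - a) * orlicz_q \<phi> a \<le> (b - a) * orlicz_q \<phi> b"
    using yf_key2[OF assms] by simp
  then show ?thesis using ab by simp
qed simp

lemma q_pos:
  assumes "orlicz_N \<phi>" "0 < s"
  shows "0 < orlicz_q \<phi> s"
proof -
  have ev: "\<forall>\<^sub>F x in at_right 0. \<phi> x / x < s / 2"
    using order_tendstoD(2)[OF oN_lim0[OF assms(1)], of "s/2"] assms(2) by simp
  have "\<exists>b>0. \<forall>y>0. y < b \<longrightarrow> \<phi> y / y < s / 2"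
    using ev unfolding eventually_at_right_field .
  then obtain b where b: "b > 0" "\<And>y. 0 < y \<Longrightarrow> y < b \<Longrightarrow> \<phi> y / y < s / 2"
    by blast
  define u where "u = b / 4"
  have u: "0 < u" "2 * u < b" using b(1) unfolding u_def by simp_all
  have "orlicz_density \<phi> u \<le> (\<phi> (u + u) - \<phi> u) / u"
    by (rule oN_density_upper[OF assms(1) u(1)])
  also have "\<dots> < s"
  proof -
    have u2: "0 < 2 * u" using u by simp
    have "\<phi> (2 * u) / (2 * u) < s / 2" using b(2)[OF u2 u(2)] .
    then have "\<phi> (2 * u) < s / 2 * (2 * u)" by (simp only: pos_divide_less_eq[OF u2])
    moreover have "u + u = 2 * u" by simp
    ultimately have 1: "\<phi> (u + u) < s * u" by simp
    have "\<phi> (u + u) - \<phi> u < s * u" using 1 oN_nonneg[OF assms(1), of u] by linarith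
    then show ?thesis by (simp only: pos_divide_less_eq[OF u(1)])
  qed
  finally have "u \<in> {u. u \<ge> 0 \<and> orlicz_density \<phi> u \<le> s}" using u by simp
  then have "u \<le> orlicz_q \<phi> s" unfolding orlicz_q_def by (rule cSup_upper[OF _ Q_bdd[OF assms(1)]])
  then show ?thesis using u by simp
qed

lemma yf_mono:
  assumes "orlicz_N \<phi>" "0 \<le> a" "a \<le> b"
  shows "young_fenchel \<phi> a \<le> young_fenchel \<phi> b"
proof -
  have "young_fenchel \<phi> a + (b - a) * orlicz_q \<phi> a \<le> young_fenchel \<phi> (a + (b - a))"
    by (rule yf_key1[OF assms(1,2)]) (use assms in simp)
  moreover have "0 \<le> (b - a) * orlicz_q \<phi> a"
    using q_nonneg[OF assms(1,2)] assms by simp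
  ultimately show ?thesis by simp
qed

lemma yf_smono:
  assumes "orlicz_N \<phi>" "0 \<le> a" "a < b"
  shows "young_fenchel \<phi> a < young_fenchel \<phi> b"
proof -
  define m where "m = (a + b) / 2"
  have m: "0 < m" "a \<le> m" "m < b" using assms by (auto simp: m_def)
  have "young_fenchel \<phi> m + (b - m) * orlicz_q \<phi> m \<le> young_fenchel \<phi> (m + (b - m))"
    by (rule yf_key1[OF assms(1)]) (use m in auto)
  moreover have "0 < (b - m) * orlicz_q \<phi> m" using q_pos[OF assms(1) m(1)] m by simp
  moreover have "young_fenchel \<phi> a \<le> young_fenchel \<phi> m" by (rule yf_mono[OF assms(1,2) m(2)])
  ultimately show ?thesis by simp
qed

lemma yf_cont:
  assumes "orlicz_N \<phi>" "0 \<le> R"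
  shows "continuous_on {0..R} (young_fenchel \<phi>)"
proof -
  have "(orlicz_q \<phi> R)-lipschitz_on {0..R} (young_fenchel \<phi>)"
  proof (rule lipschitz_onI)
    show "0 \<le> orlicz_q \<phi> R" by (rule q_nonneg[OF assms])
    fix x y assume xy: "x \<in> {0..R}" "y \<in> {0..R}"
    have gen: "\<bar>young_fenchel \<phi> b - young_fenchel \<phi> a\<bar> \<le> orlicz_q \<phi> R * \<bar>b - a\<bar>"
      if "0 \<le> a" "a \<le> b" "b \<le> R" for a b
    proof -
      have "young_fenchel \<phi> b \<le> young_fenchel \<phi> a + (b - a) * orlicz_q \<phi> b"
        by (rule yf_key2[OF assms(1)]) (use that in auto)
      moreover have "(b - a) * orlicz_q \<phi> b \<le> (b - a) * orlicz_q \<phi> R"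
        using q_mono[OF assms(1), of b R] that by (intro mult_left_mono) auto
      moreover have "young_fenchel \<phi> a \<le> young_fenchel \<phi> b" by (rule yf_mono[OF assms(1)]) (use that in auto)
      ultimately show ?thesis using that by (simp add: algebra_simps)
    qed
    show "dist (young_fenchel \<phi> x) (young_fenchel \<phi> y) \<le> orlicz_q \<phi> R * dist x y"
    proof (cases "x \<le> y")
      case True
      then show ?thesis using gen[of x y] xy by (simp add: dist_real_def abs_minus_commute)
    next
      case False
      then show ?thesis using gen[of y x] xy by (simp add: dist_real_def)
    qed
  qed
  then show ?thesis by (rule lipschitz_on_continuous_on)
qed

lemma yf_surj:
  assumes "orlicz_N \<phi>" "0 \<le> L"
  shows "\<exists>x\<ge>0. young_fenchel \<phi> x = L"
proof -
  define R where "R = L + \<phi> 1"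
  have R0: "0 \<le> R" using assms oN_nonneg[OF assms(1), of 1] by (simp add: R_def)
  have 1: "L \<le> young_fenchel \<phi> R" using yf_lin[OF assms(1), of R] by (simp add: R_def)
  have 2: "young_fenchel \<phi> 0 \<le> L" using yf_zero[OF assms(1)] assms(2) by simp
  obtain x where "0 \<le> x" "x \<le> R" "young_fenchel \<phi> x = L"
    using IVT'[of "young_fenchel \<phi>" 0 L R, OF 2 1 R0 yf_cont[OF assms(1) R0]] by blast
  then show ?thesis by blast
qed

lemma inv_pos_yf:
  assumes "orlicz_N \<phi>" "0 \<le> L"
  shows "0 \<le> inv_pos (young_fenchel \<phi>) L \<and> young_fenchel \<phi> (inv_pos (young_fenchel \<phi>) L) = L"
proof -
  obtain x where x: "x \<ge> 0" "young_fenchel \<phi> x = L" using yf_surj[OF assms] by blast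
  have uniq: "z = x" if "z \<ge> 0 \<and> young_fenchel \<phi> z = L" for z
  proof (rule ccontr)
    assume ne: "z \<noteq> x"
    show False
    proof (cases "z < x")
      case True
      then have "young_fenchel \<phi> z < young_fenchel \<phi> x" using yf_smono[OF assms(1)] that by blast
      then show False using that x by simp
    next
      case False
      then have "x < z" using ne by simp
      then have "young_fenchel \<phi> x < young_fenchel \<phi> z" using yf_smono[OF assms(1)] x by blast
      then show False using that x by simp
    qed
  qed
  have "inv_pos (young_fenchel \<phi>) L = x"
    unfolding inv_pos_def
  proof (rule the_equality)
    show "x \<ge> 0 \<and> young_fenchel \<phi> x = L" using x by simp
  qed (rule uniq)
  then show ?thesis using x by simp
qed

lemma inv_pos_nonneg:
  assumes "orlicz_N \<phi>" "0 \<le> L"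
  shows "0 \<le> inv_pos (young_fenchel \<phi>) L"
  using inv_pos_yf[OF assms] by simp

lemma yf_inv_pos:
  assumes "orlicz_N \<phi>" "0 \<le> L"
  shows "young_fenchel \<phi> (inv_pos (young_fenchel \<phi>) L) = L"
  using inv_pos_yf[OF assms] by simp

lemma inv_pos_mono:
  assumes "orlicz_N \<phi>" "0 \<le> L1" "L1 \<le> L2"
  shows "inv_pos (young_fenchel \<phi>) L1 \<le> inv_pos (young_fenchel \<phi>) L2"
proof (rule ccontr)
  assume "\<not> ?thesis"
  then have lt: "inv_pos (young_fenchel \<phi>) L2 < inv_pos (young_fenchel \<phi>) L1" by simp
  have L2: "0 \<le> L2" using assms by simp
  have "young_fenchel \<phi> (inv_pos (young_fenchel \<phi>) L2) < young_fenchel \<phi> (inv_pos (young_fenchel \<phi>) L1)"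
    by (rule yf_smono[OF assms(1) inv_pos_nonneg[OF assms(1) L2] lt])
  then show False using yf_inv_pos[OF assms(1) L2] yf_inv_pos[OF assms(1) assms(2)] assms(3) by simp
qed

lemma inv_pos_big:
  assumes "orlicz_N \<phi>" "0 \<le> R" "young_fenchel \<phi> R < L"
  shows "R < inv_pos (young_fenchel \<phi>) L"
proof (rule ccontr)
  have L0: "0 \<le> L" using yf_nonneg[OF assms(1), of R] assms by simp
  assume "\<not> ?thesis"
  then have le: "inv_pos (young_fenchel \<phi>) L \<le> R" by simp
  have "young_fenchel \<phi> (inv_pos (young_fenchel \<phi>) L) \<le> young_fenchel \<phi> R"
    by (rule yf_mono[OF assms(1) inv_pos_nonneg[OF assms(1) L0] le])
  then show False using yf_inv_pos[OF assms(1) L0] assms by simp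
qed

section \<open>Tail bounds\<close>

lemma mgf_bound_mono:
  assumes "orlicz_N \<phi>" "mgf_bound M \<phi> X a" "0 < a" "a \<le> b"
  shows "mgf_bound M \<phi> X b"
  unfolding mgf_bound_def
proof
  fix t
  have "\<bar>a * t\<bar> \<le> \<bar>b * t\<bar>" using assms(3,4) by (simp add: abs_mult mult_right_mono)
  then have "\<phi> (a * t) \<le> \<phi> (b * t)" by (rule oN_mono_abs[OF assms(1)])
  then show "integrable M (\<lambda>\<omega>. exp (t * X \<omega>)) \<and> (\<integral>\<omega>. exp (t * X \<omega>) \<partial>M) \<le> exp (\<phi> (b * t))"
    using assms(2) unfolding mgf_bound_def by (meson exp_le_cancel_iff order_trans)
qed

lemma mgf_of_tau:
  assumes "orlicz_N \<phi>" "phi_subgaussian M \<phi> X" "tau_phi M \<phi> X \<le> c" "0 < c"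
  shows "mgf_bound M \<phi> X c"
proof -
  let ?A = "{a. a > 0 \<and> mgf_bound M \<phi> X a}"
  have ne: "?A \<noteq> {}" using assms(2) unfolding phi_subgaussian_def by blast
  have bdd: "bdd_below ?A" by (rule bdd_belowI[of _ 0]) simp
  have big: "mgf_bound M \<phi> X b" if "c < b" for b
  proof -
    have "Inf ?A < b" using assms(3) that unfolding tau_phi_def by simp
    then obtain a where a: "a \<in> ?A" "a < b" using cInf_lessD[OF ne] by blast
    then show ?thesis using mgf_bound_mono[OF assms(1), of M X a b] by simp
  qed
  show ?thesis
    unfolding mgf_bound_def
  proof
    fix t
    have int: "integrable M (\<lambda>\<omega>. exp (t * X \<omega>))"
      using big[of "c + 1"] unfolding mgf_bound_def by simp
    have cont: "isCont \<phi> (c * t)"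
      using oN_cont[OF assms(1)] by (simp add: continuous_on_eq_continuous_at)
    have lim: "((\<lambda>b. exp (\<phi> (b * t))) \<longlongrightarrow> exp (\<phi> (c * t))) (at_right c)"
    proof (rule tendsto_exp)
      have "((\<lambda>b. b * t) \<longlongrightarrow> c * t) (at_right c)"
        by (intro tendsto_intros)
      then show "((\<lambda>b. \<phi> (b * t)) \<longlongrightarrow> \<phi> (c * t)) (at_right c)"
        by (rule isCont_tendsto_compose[OF cont])
    qed
    have ev: "\<forall>\<^sub>F b in at_right c. (\<integral>\<omega>. exp (t * X \<omega>) \<partial>M) \<le> exp (\<phi> (b * t))"
      using eventually_at_right_less[of c]
    proof (rule eventually_mono)
      fix b assume "c < b"
      then show "(\<integral>\<omega>. exp (t * X \<omega>) \<partial>M) \<le> exp (\<phi> (b * t))"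
        using big[of b] unfolding mgf_bound_def by simp
    qed
    have "(\<integral>\<omega>. exp (t * X \<omega>) \<partial>M) \<le> exp (\<phi> (c * t))"
      by (rule tendsto_le[OF _ lim tendsto_const ev]) simp
    then show "integrable M (\<lambda>\<omega>. exp (t * X \<omega>)) \<and> (\<integral>\<omega>. exp (t * X \<omega>) \<partial>M) \<le> exp (\<phi> (c * t))"
      using int by simp
  qed
qed

lemma chernoff:
  assumes "prob_space M" "orlicz_N \<phi>" "X \<in> borel_measurable M" "mgf_bound M \<phi> X c" "0 < c" "0 \<le> u"
  shows "measure M {\<omega> \<in> space M. u < X \<omega>} \<le> exp (- young_fenchel \<phi> (u / c))"
proof -
  interpret prob_space M by fact
  let ?P = "measure M {\<omega> \<in> space M. u < X \<omega>}"
  have key: "?P \<le> exp (\<phi> y - y * (u / c))" for y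
  proof (cases "y \<le> 0")
    case True
    have uc: "0 \<le> u / c" using assms(5,6) by simp
    have "y * (u / c) \<le> 0" by (rule mult_nonpos_nonneg[OF True uc])
    then have "0 \<le> - y * (u / c)" by simp
    then have "0 \<le> \<phi> y - y * (u / c)" using oN_nonneg[OF assms(2), of y] by simp
    then have "1 \<le> exp (\<phi> y - y * (u / c))" by simp
    moreover have "?P \<le> 1" by simp
    ultimately show ?thesis by linarith
  next
    case False
    define t where "t = y / c"
    have t: "0 < t" using False assms(5) by (simp add: t_def)
    have ct: "c * t = y" using assms(5) by (simp add: t_def)
    have sub: "{\<omega> \<in> space M. u < X \<omega>} \<subseteq> {\<omega> \<in> space M. exp (t * u) \<le> exp (t * X \<omega>)}"
      using t by auto
    have meas: "{\<omega> \<in> space M. exp (t * u) \<le> exp (t * X \<omega>)} \<in> sets M"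
      using assms(3) by measurable
    have int: "integrable M (\<lambda>\<omega>. exp (t * X \<omega>))"
      using assms(4) unfolding mgf_bound_def by simp
    have "?P \<le> measure M {\<omega> \<in> space M. exp (t * u) \<le> exp (t * X \<omega>)}"
      by (rule finite_measure_mono[OF sub meas])
    also have "\<dots> \<le> (\<integral>\<omega>. exp (t * X \<omega>) \<partial>M) / exp (t * u)"
      by (rule integral_Markov_inequality_measure[OF int, where A = "space M"]) auto
    also have "\<dots> \<le> exp (\<phi> (c * t)) / exp (t * u)"
      using assms(4) unfolding mgf_bound_def by (simp add: divide_right_mono)
    also have "\<dots> = exp (\<phi> y - y * (u / c))"
      using assms(5) by (simp add: ct exp_diff t_def)
    finally show ?thesis .
  qed
  show ?thesis
  proof (cases "?P = 0")
    case True then show ?thesis by simp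
  next
    case False
    then have P: "0 < ?P" using measure_nonneg[of M] by (simp add: less_le)
    have "young_fenchel \<phi> (u / c) \<le> - ln ?P"
    proof (rule yf_le)
      fix y
      have "ln ?P \<le> ln (exp (\<phi> y - y * (u / c)))"
        using key[of y] P by (subst ln_le_cancel_iff) auto
      then have "ln ?P \<le> \<phi> y - y * (u / c)" by simp
      then show "u / c * y - \<phi> y \<le> - ln ?P" by (simp add: algebra_simps)
    qed
    then have "exp (ln ?P) \<le> exp (- young_fenchel \<phi> (u / c))" by simp
    then show ?thesis using P by simp
  qed
qed

lemma cell_bound:
  assumes "prob_space M" "orlicz_N \<phi>" "X \<in> borel_measurable M" "mgf_bound M \<phi> X c" "0 < c"
    "0 \<le> s" "0 \<le> e"
  shows "measure M {\<omega> \<in> space M. c * s + e < X \<omega>}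
           \<le> exp (- young_fenchel \<phi> s - e / c * orlicz_q \<phi> s)"
proof -
  have "measure M {\<omega> \<in> space M. c * s + e < X \<omega>} \<le> exp (- young_fenchel \<phi> ((c * s + e) / c))"
    by (rule chernoff[OF assms(1-5)]) (use assms in simp)
  also have "(c * s + e) / c = s + e / c" using assms(5) by (simp add: field_simps)
  also have "young_fenchel \<phi> s + e / c * orlicz_q \<phi> s \<le> young_fenchel \<phi> (s + e / c)"
    by (rule yf_key1[OF assms(2,6)]) (use assms in simp)
  then have "exp (- young_fenchel \<phi> (s + e / c)) \<le> exp (- young_fenchel \<phi> s - e / c * orlicz_q \<phi> s)"
    by simp
  finally show ?thesis .
qed

section \<open>Integral of q\<close>

lemma q_mono_on: "orlicz_N \<phi> \<Longrightarrow> mono_on {0..} (orlicz_q \<phi>)"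
  by (rule mono_onI) (auto intro: q_mono)

lemma yf_mono_on: "orlicz_N \<phi> \<Longrightarrow> mono_on {0..} (young_fenchel \<phi>)"
  by (rule mono_onI) (auto intro: yf_mono)

lemma q_meas:
  assumes "orlicz_N \<phi>"
  shows "(\<lambda>y. ennreal (orlicz_q \<phi> y) * indicator {0..} y) \<in> borel_measurable borel"
proof -
  have "orlicz_q \<phi> \<in> borel_measurable (restrict_space borel {0..})"
    by (rule borel_measurable_mono_on_fnc[OF q_mono_on[OF assms]])
  then have "(\<lambda>y. ennreal (orlicz_q \<phi> y)) \<in> borel_measurable (restrict_space borel {0..})"
    by measurable
  then show ?thesis
    by (subst borel_measurable_restrict_space_iff_ennreal[symmetric]) auto
qed

lemma q_meas_ind:
  assumes "orlicz_N \<phi>" "0 \<le> a"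
  shows "(\<lambda>y. ennreal (orlicz_q \<phi> y) * indicator {a..<b} y) \<in> borel_measurable borel"
proof -
  have "(\<lambda>y. (ennreal (orlicz_q \<phi> y) * indicator {0..} y) * indicator {a..<b} y) \<in> borel_measurable borel"
    using q_meas[OF assms(1)] by measurable
  moreover have "(\<lambda>y. (ennreal (orlicz_q \<phi> y) * indicator {0..} y) * indicator {a..<b} y) =
      (\<lambda>y. ennreal (orlicz_q \<phi> y) * indicator {a..<b} y)"
    using assms(2) by (auto simp: fun_eq_iff indicator_def)
  ultimately show ?thesis by simp
qed

lemma int_q_step:
  assumes "orlicz_N \<phi>" "0 \<le> a" "0 \<le> h"
  shows "ennreal (\<Sum>i<M. h * orlicz_q \<phi> (a + real i * h))
          \<le> (\<integral>\<^sup>+y. ennreal (orlicz_q \<phi> y) * indicator {a..<a + real M * h} y \<partial>lborel)"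
proof (induction M)
  case 0
  then show ?case by simp
next
  case (Suc M)
  let ?c = "a + real M * h"
  have c0: "0 \<le> ?c" using assms by simp
  have split: "indicator {a..<a + real (Suc M) * h} y =
      (indicator {a..<?c} y + indicator {?c..<?c + h} y :: ennreal)" for y
  proof -
    have 1: "a \<le> ?c" using assms(3) by simp
    have 2: "a + real (Suc M) * h = ?c + h" by (simp add: algebra_simps)
    have 3: "?c \<le> ?c + h" using assms(3) by simp
    have U: "{a..<a + real (Suc M) * h} = {a..<?c} \<union> {?c..<?c + h}"
      by (subst 2) (rule ivl_disj_un_two(3)[symmetric, OF 1 3])
    have D: "{a..<?c} \<inter> {?c..<?c + h} = {}" by auto
    show ?thesis unfolding U using D by (auto split: split_indicator)
  qed
  have "(\<integral>\<^sup>+y. ennreal (orlicz_q \<phi> y) * indicator {a..<a + real (Suc M) * h} y \<partial>lborel)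
      = (\<integral>\<^sup>+y. ennreal (orlicz_q \<phi> y) * indicator {a..<?c} y
              + ennreal (orlicz_q \<phi> y) * indicator {?c..<?c + h} y \<partial>lborel)"
    by (simp only: split distrib_left)
  also have "\<dots> = (\<integral>\<^sup>+y. ennreal (orlicz_q \<phi> y) * indicator {a..<?c} y \<partial>lborel)
        + (\<integral>\<^sup>+y. ennreal (orlicz_q \<phi> y) * indicator {?c..<?c + h} y \<partial>lborel)"
    by (rule nn_integral_add) (use q_meas_ind[OF assms(1,2)] q_meas_ind[OF assms(1) c0] in simp_all)
  finally have eq: "(\<integral>\<^sup>+y. ennreal (orlicz_q \<phi> y) * indicator {a..<a + real (Suc M) * h} y \<partial>lborel)
      = (\<integral>\<^sup>+y. ennreal (orlicz_q \<phi> y) * indicator {a..<?c} y \<partial>lborel)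
        + (\<integral>\<^sup>+y. ennreal (orlicz_q \<phi> y) * indicator {?c..<?c + h} y \<partial>lborel)" .
  have "ennreal (h * orlicz_q \<phi> ?c) = (\<integral>\<^sup>+y. ennreal (orlicz_q \<phi> ?c) * indicator {?c..<?c + h} y \<partial>lborel)"
    using assms(3) q_nonneg[OF assms(1) c0]
    by (simp add: nn_integral_cmult_indicator ennreal_mult' mult.commute)
  also have "\<dots> \<le> (\<integral>\<^sup>+y. ennreal (orlicz_q \<phi> y) * indicator {?c..<?c + h} y \<partial>lborel)"
  proof (rule nn_integral_mono)
    fix y
    show "ennreal (orlicz_q \<phi> ?c) * indicator {?c..<?c + h} y \<le> ennreal (orlicz_q \<phi> y) * indicator {?c..<?c + h} y"
      using q_mono[OF assms(1) c0, of y] by (auto simp: indicator_def intro: ennreal_leI)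
  qed
  finally have second: "ennreal (h * orlicz_q \<phi> ?c) \<le> (\<integral>\<^sup>+y. ennreal (orlicz_q \<phi> y) * indicator {?c..<?c + h} y \<partial>lborel)" .
  have nn1: "0 \<le> (\<Sum>i<M. h * orlicz_q \<phi> (a + real i * h))"
    using assms q_nonneg[OF assms(1)] by (intro sum_nonneg) simp
  have nn2: "0 \<le> h * orlicz_q \<phi> ?c" using assms(3) q_nonneg[OF assms(1) c0] by simp
  have "ennreal (\<Sum>i<Suc M. h * orlicz_q \<phi> (a + real i * h))
      = ennreal (\<Sum>i<M. h * orlicz_q \<phi> (a + real i * h)) + ennreal (h * orlicz_q \<phi> ?c)"
    using nn1 nn2 by (simp add: ennreal_plus)
  also have "\<dots> \<le> (\<integral>\<^sup>+y. ennreal (orlicz_q \<phi> y) * indicator {a..<?c} y \<partial>lborel)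
        + (\<integral>\<^sup>+y. ennreal (orlicz_q \<phi> y) * indicator {?c..<?c + h} y \<partial>lborel)"
    by (rule add_mono[OF Suc.IH second])
  finally show ?case using eq by simp
qed

lemma int_q_ge:
  assumes "orlicz_N \<phi>" "0 \<le> a" "a \<le> b"
  shows "ennreal (young_fenchel \<phi> b - young_fenchel \<phi> a)
           \<le> (\<integral>\<^sup>+y. ennreal (orlicz_q \<phi> y) * indicator {a..b} y \<partial>lborel)"
proof -
  let ?I = "\<integral>\<^sup>+y. ennreal (orlicz_q \<phi> y) * indicator {a..b} y \<partial>lborel"
  let ?D = "young_fenchel \<phi> b - young_fenchel \<phi> a"
  let ?K = "(b - a) * (orlicz_q \<phi> b - orlicz_q \<phi> a)"
  have approx: "ennreal (?D - ?K / real M) \<le> ?I" if M: "M \<ge> 1" for M :: nat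
  proof -
    define h where "h = (b - a) / real M"
    have h0: "0 \<le> h" using assms M by (simp add: h_def)
    have hM: "a + real M * h = b" using M by (simp add: h_def)
    define t where "t i = a + real i * h" for i :: nat
    have t0: "0 \<le> t i" for i using assms h0 by (simp add: t_def)
    have tSuc: "t (Suc i) = t i + h" for i by (simp add: t_def algebra_simps)
    have each: "young_fenchel \<phi> (t (Suc i)) - young_fenchel \<phi> (t i) - h * (orlicz_q \<phi> (t (Suc i)) - orlicz_q \<phi> (t i))
        \<le> h * orlicz_q \<phi> (t i)" for i
    proof -
      have "young_fenchel \<phi> (t (Suc i)) \<le> young_fenchel \<phi> (t i) + (t (Suc i) - t i) * orlicz_q \<phi> (t (Suc i))"
        by (rule yf_key2[OF assms(1) t0]) (simp add: tSuc h0)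
      then show ?thesis by (simp add: tSuc algebra_simps)
    qed
    have "(\<Sum>i<M. young_fenchel \<phi> (t (Suc i)) - young_fenchel \<phi> (t i) - h * (orlicz_q \<phi> (t (Suc i)) - orlicz_q \<phi> (t i)))
        \<le> (\<Sum>i<M. h * orlicz_q \<phi> (t i))"
      by (rule sum_mono) (rule each)
    moreover have "(\<Sum>i<M. young_fenchel \<phi> (t (Suc i)) - young_fenchel \<phi> (t i) - h * (orlicz_q \<phi> (t (Suc i)) - orlicz_q \<phi> (t i)))
        = (young_fenchel \<phi> (t M) - young_fenchel \<phi> (t 0)) - h * (orlicz_q \<phi> (t M) - orlicz_q \<phi> (t 0))"
    proof -
      have "(\<Sum>i<M. young_fenchel \<phi> (t (Suc i)) - young_fenchel \<phi> (t i) - h * (orlicz_q \<phi> (t (Suc i)) - orlicz_q \<phi> (t i)))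
         = (\<Sum>i<M. young_fenchel \<phi> (t (Suc i)) - young_fenchel \<phi> (t i)) - h * (\<Sum>i<M. orlicz_q \<phi> (t (Suc i)) - orlicz_q \<phi> (t i))"
        by (simp only: sum_subtractf[of _ "\<lambda>i. h * (orlicz_q \<phi> (t (Suc i)) - orlicz_q \<phi> (t i))"] sum_distrib_left[symmetric])
      also have "\<dots> = (young_fenchel \<phi> (t M) - young_fenchel \<phi> (t 0)) - h * (orlicz_q \<phi> (t M) - orlicz_q \<phi> (t 0))"
        by (simp only: sum_lessThan_telescope[of "\<lambda>i. young_fenchel \<phi> (t i)"] sum_lessThan_telescope[of "\<lambda>i. orlicz_q \<phi> (t i)"])
      finally show ?thesis .
    qed
    moreover have "t M = b" "t 0 = a" using hM by (simp_all add: t_def)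
    moreover have "h * (orlicz_q \<phi> b - orlicz_q \<phi> a) = ?K / real M" by (simp add: h_def)
    ultimately have le: "?D - ?K / real M \<le> (\<Sum>i<M. h * orlicz_q \<phi> (a + real i * h))"
      by (simp add: t_def)
    have "ennreal (?D - ?K / real M) \<le> ennreal (\<Sum>i<M. h * orlicz_q \<phi> (a + real i * h))"
      using le by (rule ennreal_leI)
    also have "\<dots> \<le> (\<integral>\<^sup>+y. ennreal (orlicz_q \<phi> y) * indicator {a..<a + real M * h} y \<partial>lborel)"
      by (rule int_q_step[OF assms(1,2) h0])
    also have "\<dots> \<le> ?I"
      unfolding hM by (intro nn_integral_mono) (auto simp: indicator_def)
    finally show ?thesis .
  qed
  show ?thesis
  proof (cases "?I = \<infinity>")
    case True then show ?thesis by simp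
  next
    case False
    then obtain r where r: "?I = ennreal r" "0 \<le> r"
      by (cases ?I) auto
    have le: "?D - ?K / real (Suc n) \<le> r" for n
    proof -
      have "ennreal (?D - ?K / real (Suc n)) \<le> ennreal r" using approx[of "Suc n"] r by simp
      then show ?thesis using ennreal_le_iff[OF r(2)] by simp
    qed
    have lim: "(\<lambda>n. ?D - ?K / real (Suc n)) \<longlonglongrightarrow> ?D - 0"
      by (intro tendsto_intros LIMSEQ_Suc[OF lim_const_over_n])
    have "?D \<le> r"
      using LIMSEQ_le_const2[OF lim] le by simp
    then show ?thesis using r by (simp add: ennreal_leI)
  qed
qed

section \<open>Counting lattice points under the hyperbola\<close>

lemma harm_le_ln:
  assumes "1 \<le> K"
  shows "(harm K :: real) \<le> 1 + ln (real K)"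
proof -
  obtain m where m: "K = Suc m" using assms by (cases K) auto
  have "harm (Suc m) - ln (real (Suc m)) \<le> harm (Suc 0) - ln (real (Suc 0))"
    using decseq_harm_diff_ln unfolding decseq_def by blast
  moreover have "(harm (Suc 0) :: real) = 1" by (simp add: harm_def)
  ultimately show ?thesis using m by simp
qed

lemma count_hyper:
  fixes X :: real
  assumes "1 \<le> X"
  shows "real (card {(k::nat, n::nat). 1 \<le> k \<and> 1 \<le> n \<and> real (k * n) \<le> X}) \<le> X * (1 + ln X)"
    and "finite {(k::nat, n::nat). 1 \<le> k \<and> 1 \<le> n \<and> real (k * n) \<le> X}"
proof -
  define K where "K = nat \<lfloor>X\<rfloor>"
  have K1: "1 \<le> K" using assms by (simp add: K_def le_nat_floor)
  have KX: "real K \<le> X" using assms by (simp add: K_def)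
  let ?S = "SIGMA k:{1..K}. {1..nat \<lfloor>X / real k\<rfloor>}"
  have sub: "{(k::nat, n::nat). 1 \<le> k \<and> 1 \<le> n \<and> real (k * n) \<le> X} \<subseteq> ?S"
  proof
    fix p assume "p \<in> {(k::nat, n::nat). 1 \<le> k \<and> 1 \<le> n \<and> real (k * n) \<le> X}"
    then obtain k n where p: "p = (k, n)" and kn: "1 \<le> k" "1 \<le> n" "real (k * n) \<le> X" by auto
    have "real k \<le> real (k * n)" using kn by simp
    then have "real k \<le> X" using kn by linarith
    then have k: "k \<le> K" unfolding K_def by (simp add: le_nat_floor)
    have "real n \<le> X / real k" using kn by (simp add: le_divide_eq mult.commute)
    then have n: "n \<le> nat \<lfloor>X / real k\<rfloor>" by (simp add: le_nat_floor)
    show "p \<in> ?S" using kn k n p by simp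
  qed
  have fin: "finite ?S" by simp
  then show "finite {(k::nat, n::nat). 1 \<le> k \<and> 1 \<le> n \<and> real (k * n) \<le> X}"
    using sub finite_subset by blast
  have "card {(k::nat, n::nat). 1 \<le> k \<and> 1 \<le> n \<and> real (k * n) \<le> X} \<le> card ?S"
    by (rule card_mono[OF fin sub])
  also have "card ?S = (\<Sum>k\<in>{1..K}. nat \<lfloor>X / real k\<rfloor>)" by simp
  finally have "real (card {(k::nat, n::nat). 1 \<le> k \<and> 1 \<le> n \<and> real (k * n) \<le> X})
      \<le> real (\<Sum>k\<in>{1..K}. nat \<lfloor>X / real k\<rfloor>)" by linarith
  also have "\<dots> = (\<Sum>k\<in>{1..K}. real (nat \<lfloor>X / real k\<rfloor>))" by simp
  also have "\<dots> \<le> (\<Sum>k\<in>{1..K}. X * inverse (real k))"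
  proof (rule sum_mono)
    fix k assume "k \<in> {1..K}"
    have "0 \<le> X / real k" using assms by simp
    then have "real (nat \<lfloor>X / real k\<rfloor>) \<le> X / real k" by linarith
    then show "real (nat \<lfloor>X / real k\<rfloor>) \<le> X * inverse (real k)" by (simp add: divide_inverse)
  qed
  also have "\<dots> = X * harm K" by (simp add: harm_def sum_distrib_left)
  also have "\<dots> \<le> X * (1 + ln X)"
  proof (rule mult_left_mono)
    have "ln (real K) \<le> ln X" using K1 KX by simp
    then show "harm K \<le> 1 + ln X" using harm_le_ln[OF K1] by simp
  qed (use assms in simp)
  finally show "real (card {(k::nat, n::nat). 1 \<le> k \<and> 1 \<le> n \<and> real (k * n) \<le> X}) \<le> X * (1 + ln X)" .
qed

definition wconst :: real where "wconst = 4 / ln 2 * ((1 + ln 2) / ln 4 + 1)"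

lemma weight_bound:
  assumes u: "0 \<le> u"
    and S: "S \<subseteq> {(k::nat, n::nat). 1 \<le> k \<and> 1 \<le> n \<and> 4 \<le> k * n \<and> exp u \<le> real (k * n) \<and> real (k * n) \<le> 2 * exp u}"
  shows "(\<Sum>(k, n)\<in>S. 1 / (real (k * n) * ln 2 * (ln (real (k * n)) - ln 2))) \<le> wconst"
proof -
  define A where "A = exp u"
  have A1: "1 \<le> A" using u by (simp add: A_def)
  define m where "m = max u (ln 4)"
  have l2: "0 < ln (2::real)" by simp
  have l4: "0 < ln (4::real)" by simp
  have m0: "0 < m" using l4 by (simp add: m_def less_max_iff_disj)
  let ?T = "{(k::nat, n::nat). 1 \<le> k \<and> 1 \<le> n \<and> real (k * n) \<le> 2 * A}"
  have STsub: "S \<subseteq> ?T" using S by (auto simp: A_def)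
  have finT: "finite ?T" using count_hyper(2)[of "2 * A"] A1 by simp
  have finS: "finite S" using finite_subset[OF STsub finT] .
  have tm: "1 / (real (k * n) * ln 2 * (ln (real (k * n)) - ln 2)) \<le> 2 / (A * ln 2 * m)"
    if kn: "(k, n) \<in> S" for k n
  proof -
    let ?N = "real (k * n)"
    have mem: "4 \<le> k * n \<and> exp u \<le> real (k * n)" using subsetD[OF S kn] by simp
    have "real (4::nat) \<le> ?N" using mem by (simp only: of_nat_le_iff)
    then have N4: "4 \<le> ?N" by simp
    have NA: "A \<le> ?N" using mem by (simp add: A_def)
    have N0: "0 < ?N" using N4 by simp
    have lnN4: "ln 4 \<le> ln ?N" using N4 by simp
    have "ln (exp u) \<le> ln ?N" using NA N0 by (subst ln_le_cancel_iff) (auto simp: A_def)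
    then have lnNu: "u \<le> ln ?N" by simp
    have lnm: "m \<le> ln ?N" using lnN4 lnNu by (simp add: m_def)
    have "ln (4::real) = 2 * ln 2"
    proof -
      have e: "(4::real) = 2 * 2" by simp
      have "ln (4::real) = ln 2 + ln 2" unfolding e by (rule ln_mult_pos) simp_all
      then show ?thesis by simp
    qed
    then have half: "ln ?N / 2 \<le> ln ?N - ln 2" using lnN4 by simp
    have "0 < ln ?N" using lnN4 l4 by linarith
    then have pos: "0 < ln ?N / 2" by simp
    have "A * ln 2 * m \<le> ?N * ln 2 * (ln ?N / 2) * 2"
    proof -
      have "A * m \<le> ?N * ln ?N" using NA lnm A1 m0 by (intro mult_mono) auto
      then show ?thesis using l2 by (simp add: algebra_simps)
    qed
    also have "\<dots> \<le> ?N * ln 2 * (ln ?N - ln 2) * 2"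
      using half N0 l2 by (intro mult_right_mono mult_left_mono) auto
    finally have le: "A * ln 2 * m \<le> ?N * ln 2 * (ln ?N - ln 2) * 2" .
    have p1: "0 < A * ln 2 * m" using A1 l2 m0 by simp
    have "0 < ln ?N - ln 2" using half pos by linarith
    then have p2: "0 < ?N * ln 2 * (ln ?N - ln 2)" using N0 l2 by simp
    have "1 / (?N * ln 2 * (ln ?N - ln 2)) = 2 / (?N * ln 2 * (ln ?N - ln 2) * 2)" by simp
    also have "\<dots> \<le> 2 / (A * ln 2 * m)"
      by (rule divide_left_mono[OF le]) (use p1 p2 in simp_all)
    finally show ?thesis .
  qed
  have "(\<Sum>(k, n)\<in>S. 1 / (real (k * n) * ln 2 * (ln (real (k * n)) - ln 2))) \<le> (\<Sum>(k, n)\<in>S. 2 / (A * ln 2 * m))"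
    by (rule sum_mono) (use tm in auto)
  also have "\<dots> = real (card S) * (2 / (A * ln 2 * m))" by simp
  also have "\<dots> \<le> real (card ?T) * (2 / (A * ln 2 * m))"
    using card_mono[OF finT STsub] A1 l2 m0 by (intro mult_right_mono) auto
  also have "\<dots> \<le> (2 * A) * (1 + ln (2 * A)) * (2 / (A * ln 2 * m))"
    using count_hyper(1)[of "2 * A"] A1 l2 m0 by (intro mult_right_mono) auto
  also have "\<dots> = 4 / ln 2 * ((1 + ln 2 + u) / m)"
    using A1 l2 m0 by (simp add: ln_mult A_def field_simps)
  also have "\<dots> \<le> 4 / ln 2 * ((1 + ln 2) / ln 4 + 1)"
  proof (rule mult_left_mono)
    have m4: "ln 4 \<le> m" by (simp add: m_def)
    have "(1 + ln 2) / m \<le> (1 + ln 2) / ln 4"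
      by (rule divide_left_mono[OF m4]) (use l2 l4 m0 in simp_all)
    moreover have "u / m \<le> 1" using m0 by (simp add: m_def)
    ultimately show "(1 + ln 2 + u) / m \<le> (1 + ln 2) / ln 4 + 1"
      by (simp add: add_divide_distrib)
  qed (use l2 in simp)
  finally show ?thesis by (simp add: wconst_def)
qed

lemma f_meas:
  assumes ON: "orlicz_N \<phi>" and gmono: "mono_on {0..} g"
  shows "(\<lambda>y. ennreal (young_fenchel \<phi> y * orlicz_q \<phi> y *
            exp (- \<epsilon> * orlicz_q \<phi> y / g (young_fenchel \<phi> y + ln 2))) * indicator {0..} y)
         \<in> borel_measurable borel"
proof -
  have m1[measurable]: "young_fenchel \<phi> \<in> borel_measurable (restrict_space borel {0..})"
    by (rule borel_measurable_mono_on_fnc[OF yf_mono_on[OF ON]])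
  have m2[measurable]: "orlicz_q \<phi> \<in> borel_measurable (restrict_space borel {0..})"
    by (rule borel_measurable_mono_on_fnc[OF q_mono_on[OF ON]])
  have mo: "mono_on {0..} (\<lambda>y. g (young_fenchel \<phi> y + ln 2))"
  proof (rule mono_onI)
    fix x y :: real assume xy: "x \<in> {0..}" "y \<in> {0..}" "x \<le> y"
    have "young_fenchel \<phi> x \<le> young_fenchel \<phi> y" using yf_mono[OF ON] xy by simp
    moreover have "0 \<le> young_fenchel \<phi> x" by (rule yf_nonneg[OF ON])
    ultimately show "g (young_fenchel \<phi> x + ln 2) \<le> g (young_fenchel \<phi> y + ln 2)"
      by (intro mono_onD[OF gmono]) auto
  qed
  have m3[measurable]: "(\<lambda>y. g (young_fenchel \<phi> y + ln 2)) \<in> borel_measurable (restrict_space borel {0..})"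
    by (rule borel_measurable_mono_on_fnc[OF mo])
  have "(\<lambda>y. ennreal (young_fenchel \<phi> y * orlicz_q \<phi> y *
            exp (- \<epsilon> * orlicz_q \<phi> y / g (young_fenchel \<phi> y + ln 2)))) \<in> borel_measurable (restrict_space borel {0..})"
    by measurable
  then show ?thesis
    by (subst borel_measurable_restrict_space_iff_ennreal[symmetric]) auto
qed

lemma cell_int_lower:
  assumes ON: "orlicz_N \<phi>" and gpos: "\<And>x. x \<ge> 0 \<Longrightarrow> g x > 0" and gmono: "mono_on {0..} g"
    and eps: "0 < \<epsilon>" and N4: "4 \<le> N"
  shows "ennreal ((ln N - ln 2) * exp (- \<epsilon> * orlicz_q \<phi> (inv_pos (young_fenchel \<phi>) (ln N)) / g (ln N)) * ln 2)
    \<le> (\<integral>\<^sup>+y. (ennreal (young_fenchel \<phi> y * orlicz_q \<phi> y *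
            exp (- \<epsilon> * orlicz_q \<phi> y / g (young_fenchel \<phi> y + ln 2))) * indicator {0..} y)
          * indicator {inv_pos (young_fenchel \<phi>) (ln N - ln 2) .. inv_pos (young_fenchel \<phi>) (ln N)} y \<partial>lborel)"
proof -
  let ?s = "inv_pos (young_fenchel \<phi>) (ln N)"
  let ?l = "inv_pos (young_fenchel \<phi>) (ln N - ln 2)"
  let ?F = "exp (- \<epsilon> * orlicz_q \<phi> ?s / g (ln N))"
  let ?J = "{?l .. ?s}"
  have l2: "0 < ln (2::real)" by simp
  have lnN: "ln 2 \<le> ln N" using N4 by simp
  have L0: "0 \<le> ln N - ln 2" using lnN by simp
  have lnN0: "0 \<le> ln N" using lnN l2 by linarith
  have l0: "0 \<le> ?l" by (rule inv_pos_nonneg[OF ON L0])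
  have ls: "?l \<le> ?s" by (rule inv_pos_mono[OF ON L0]) simp
  have s0: "0 \<le> ?s" using l0 ls by simp
  have yl: "young_fenchel \<phi> ?l = ln N - ln 2" by (rule yf_inv_pos[OF ON L0])
  have ys: "young_fenchel \<phi> ?s = ln N" by (rule yf_inv_pos[OF ON lnN0])
  have gN: "0 < g (ln N)" using gpos lnN0 by simp
  have K0: "0 \<le> (ln N - ln 2) * ?F" using L0 by simp
  have pw: "ennreal ((ln N - ln 2) * ?F) * (ennreal (orlicz_q \<phi> y) * indicator ?J y)
      \<le> (ennreal (young_fenchel \<phi> y * orlicz_q \<phi> y *
            exp (- \<epsilon> * orlicz_q \<phi> y / g (young_fenchel \<phi> y + ln 2))) * indicator {0..} y) * indicator ?J y" for y
  proof (cases "y \<in> ?J")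
    case True
    then have y0: "0 \<le> y" and yl': "?l \<le> y" and ys': "y \<le> ?s" using l0 by auto
    have psiy: "ln N - ln 2 \<le> young_fenchel \<phi> y" using yf_mono[OF ON l0 yl'] yl by simp
    have qy0: "0 \<le> orlicz_q \<phi> y" by (rule q_nonneg[OF ON y0])
    have qys: "orlicz_q \<phi> y \<le> orlicz_q \<phi> ?s" by (rule q_mono[OF ON y0 ys'])
    have garg: "ln N \<le> young_fenchel \<phi> y + ln 2" using psiy by simp
    have gle: "g (ln N) \<le> g (young_fenchel \<phi> y + ln 2)"
      by (rule mono_onD[OF gmono]) (use lnN0 garg in auto)
    have "orlicz_q \<phi> y / g (young_fenchel \<phi> y + ln 2) \<le> orlicz_q \<phi> y / g (ln N)"
      by (rule divide_left_mono[OF gle qy0]) (use gN gle in simp)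
    also have "\<dots> \<le> orlicz_q \<phi> ?s / g (ln N)"
      by (rule divide_right_mono[OF qys]) (use gN in simp)
    finally have "\<epsilon> * (orlicz_q \<phi> y / g (young_fenchel \<phi> y + ln 2)) \<le> \<epsilon> * (orlicz_q \<phi> ?s / g (ln N))"
      using eps by (intro mult_left_mono) auto
    then have G: "?F \<le> exp (- \<epsilon> * orlicz_q \<phi> y / g (young_fenchel \<phi> y + ln 2))"
      by simp
    have "(ln N - ln 2) * ?F * orlicz_q \<phi> y
        \<le> young_fenchel \<phi> y * exp (- \<epsilon> * orlicz_q \<phi> y / g (young_fenchel \<phi> y + ln 2)) * orlicz_q \<phi> y"
      using psiy G L0 qy0 by (intro mult_right_mono mult_mono) auto
    then have "(ln N - ln 2) * ?F * orlicz_q \<phi> y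
        \<le> young_fenchel \<phi> y * orlicz_q \<phi> y * exp (- \<epsilon> * orlicz_q \<phi> y / g (young_fenchel \<phi> y + ln 2))"
      by (simp add: algebra_simps)
    then show ?thesis using True y0 K0 qy0
      by (simp add: ennreal_mult'[symmetric] ennreal_leI)
  qed simp
  have measJ: "(\<lambda>y. ennreal (orlicz_q \<phi> y) * indicator ?J y) \<in> borel_measurable borel"
  proof -
    have "(\<lambda>y. (ennreal (orlicz_q \<phi> y) * indicator {0..} y) * indicator ?J y) \<in> borel_measurable borel"
      using q_meas[OF ON] by measurable
    moreover have "(\<lambda>y. (ennreal (orlicz_q \<phi> y) * indicator {0..} y) * indicator ?J y) =
        (\<lambda>y. ennreal (orlicz_q \<phi> y) * indicator ?J y)"
      using l0 by (auto simp: fun_eq_iff indicator_def)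
    ultimately show ?thesis by simp
  qed
  have "ennreal ((ln N - ln 2) * ?F * ln 2) = ennreal ((ln N - ln 2) * ?F) * ennreal (young_fenchel \<phi> ?s - young_fenchel \<phi> ?l)"
    using yl ys K0 l2 by (simp add: ennreal_mult'[symmetric])
  also have "\<dots> \<le> ennreal ((ln N - ln 2) * ?F) * (\<integral>\<^sup>+y. ennreal (orlicz_q \<phi> y) * indicator ?J y \<partial>lborel)"
    by (intro mult_left_mono int_q_ge[OF ON l0 ls]) simp
  also have "\<dots> = (\<integral>\<^sup>+y. ennreal ((ln N - ln 2) * ?F) * (ennreal (orlicz_q \<phi> y) * indicator ?J y) \<partial>lborel)"
    by (rule nn_integral_cmult[symmetric]) (use measJ in simp)
  also have "\<dots> \<le> (\<integral>\<^sup>+y. (ennreal (young_fenchel \<phi> y * orlicz_q \<phi> y *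
            exp (- \<epsilon> * orlicz_q \<phi> y / g (young_fenchel \<phi> y + ln 2))) * indicator {0..} y) * indicator ?J y \<partial>lborel)"
    by (rule nn_integral_mono) (rule pw)
  finally show ?thesis .
qed

lemma cell_prob:
  assumes P: "prob_space M" and ON: "orlicz_N \<phi>"
    and SG: "phi_subgaussian M \<phi> Y" and gpos: "\<And>x. x \<ge> 0 \<Longrightarrow> g x > 0"
    and tau: "tau_phi M \<phi> Y \<le> g (ln N)" and N1: "1 \<le> N" and eps: "0 \<le> \<epsilon>"
  shows "measure M {\<omega> \<in> space M. g (ln N) * inv_pos (young_fenchel \<phi>) (ln N) + \<epsilon> < Y \<omega>}
    \<le> exp (- \<epsilon> * orlicz_q \<phi> (inv_pos (young_fenchel \<phi>) (ln N)) / g (ln N)) / N"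
proof -
  have lnN0: "0 \<le> ln N" using N1 by simp
  have gN: "0 < g (ln N)" using gpos lnN0 by simp
  have mgf: "mgf_bound M \<phi> Y (g (ln N))" by (rule mgf_of_tau[OF ON SG tau gN])
  have meas: "Y \<in> borel_measurable M" using SG unfolding phi_subgaussian_def by simp
  have s0: "0 \<le> inv_pos (young_fenchel \<phi>) (ln N)" by (rule inv_pos_nonneg[OF ON lnN0])
  have "measure M {\<omega> \<in> space M. g (ln N) * inv_pos (young_fenchel \<phi>) (ln N) + \<epsilon> < Y \<omega>}
      \<le> exp (- young_fenchel \<phi> (inv_pos (young_fenchel \<phi>) (ln N)) - \<epsilon> / g (ln N) * orlicz_q \<phi> (inv_pos (young_fenchel \<phi>) (ln N)))"
    by (rule cell_bound[OF P ON meas mgf gN s0 eps])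
  also have "\<dots> = exp (- ln N) * exp (- \<epsilon> * orlicz_q \<phi> (inv_pos (young_fenchel \<phi>) (ln N)) / g (ln N))"
    by (simp add: yf_inv_pos[OF ON lnN0] exp_add[symmetric] exp_diff)
  also have "\<dots> = exp (- \<epsilon> * orlicz_q \<phi> (inv_pos (young_fenchel \<phi>) (ln N)) / g (ln N)) / N"
    using N1 by (simp add: exp_minus field_simps)
  finally show ?thesis .
qed

lemma bc_main:
  fixes M :: "'a measure" and \<phi> g :: "real \<Rightarrow> real" and X :: "nat \<Rightarrow> nat \<Rightarrow> 'a \<Rightarrow> real"
  assumes P: "prob_space M" and ON: "orlicz_N \<phi>"
    and SG: "\<And>k n. k \<ge> 1 \<Longrightarrow> n \<ge> 1 \<Longrightarrow> phi_subgaussian M \<phi> (X k n)"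
    and gpos: "\<And>x. x \<ge> 0 \<Longrightarrow> g x > 0" and gmono: "mono_on {0..} g"
    and tau: "\<And>k n. k \<ge> 1 \<Longrightarrow> n \<ge> 1 \<Longrightarrow> tau_phi M \<phi> (X k n) \<le> g (ln (real (k * n)))"
    and eps: "0 < \<epsilon>"
    and int: "(\<integral>\<^sup>+ x \<in> {0..}. ennreal (young_fenchel \<phi> x * orlicz_q \<phi> x *
               exp (- \<epsilon> * orlicz_q \<phi> x / g (young_fenchel \<phi> x + ln 2))) \<partial>lborel) < \<infinity>"
  shows "AE \<omega> in M. finite {(k, n). 1 \<le> k \<and> 1 \<le> n \<and> 4 \<le> k * n \<and>
            g (ln (real (k * n))) * inv_pos (young_fenchel \<phi>) (ln (real (k * n))) + \<epsilon> < X k n \<omega>}"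
proof -
  interpret prob_space M by (rule P)
  define I where "I = {(k::nat, n::nat). 1 \<le> k \<and> 1 \<le> n \<and> 4 \<le> k * n}"
  define f where "f y = ennreal (young_fenchel \<phi> y * orlicz_q \<phi> y *
            exp (- \<epsilon> * orlicz_q \<phi> y / g (young_fenchel \<phi> y + ln 2))) * indicator {0..} y" for y
  define J where "J N = {inv_pos (young_fenchel \<phi>) (ln N - ln 2) .. inv_pos (young_fenchel \<phi>) (ln N)}" for N :: real
  define c where "c N = 1 / (N * ln 2 * (ln N - ln 2))" for N :: real
  define E where "E i = (if i \<in> I then {\<omega> \<in> space M. g (ln (real (fst i * snd i))) * inv_pos (young_fenchel \<phi>) (ln (real (fst i * snd i))) + \<epsilon> < X (fst i) (snd i) \<omega>} else {})" for i
  define w where "w i y = (if i \<in> I then ennreal (c (real (fst i * snd i))) * (f y * indicator (J (real (fst i * snd i))) y) else 0)" for i y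
  have fmeas[measurable]: "f \<in> borel_measurable borel"
    unfolding f_def by (rule f_meas[OF ON gmono])
  have intf: "integral\<^sup>N lborel f < \<infinity>" using int by (simp add: f_def[abs_def])
  have Emeas[measurable]: "E i \<in> sets M" for i
  proof (cases "i \<in> I")
    case True
    then have "1 \<le> fst i" "1 \<le> snd i" by (auto simp: I_def)
    then have "X (fst i) (snd i) \<in> borel_measurable M" using SG unfolding phi_subgaussian_def by blast
    then show ?thesis using True by (simp add: E_def)
  qed (simp add: E_def)
  have wmeas: "w i \<in> borel_measurable borel" for i
  proof -
    have "(\<lambda>y. ennreal (c (real (fst i * snd i))) * (f y * indicator (J (real (fst i * snd i))) y)) \<in> borel_measurable borel"
      unfolding J_def by measurable
    then show ?thesis by (cases "i \<in> I") (simp_all add: w_def[abs_def])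
  qed
  have cell: "ennreal (measure M (E i)) \<le> (\<integral>\<^sup>+y. w i y \<partial>lborel)" for i
  proof (cases "i \<in> I")
    case False then show ?thesis by (simp add: E_def w_def)
  next
    case True
    obtain k n where i: "i = (k, n)" by (cases i)
    have kn: "1 \<le> k" "1 \<le> n" "4 \<le> k * n" using True by (auto simp: I_def i)
    define N where "N = real (k * n)"
    have N4: "4 \<le> N" using kn(3) unfolding N_def by (metis of_nat_le_iff of_nat_numeral)
    have l2: "0 < ln (2::real)" by simp
    have lnN: "ln 2 < ln N" using N4 by simp
    let ?F = "exp (- \<epsilon> * orlicz_q \<phi> (inv_pos (young_fenchel \<phi>) (ln N)) / g (ln N))"
    have Ei: "E i = {\<omega> \<in> space M. g (ln N) * inv_pos (young_fenchel \<phi>) (ln N) + \<epsilon> < X k n \<omega>}"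
      using True by (simp add: E_def i N_def)
    have taukn: "tau_phi M \<phi> (X k n) \<le> g (ln N)" using tau[OF kn(1,2)] by (simp add: N_def)
    have "measure M (E i) \<le> ?F / N"
      unfolding Ei by (rule cell_prob[where g = g and N = N, OF P ON SG[OF kn(1,2)] gpos taukn]) (use N4 eps in simp_all)
    also have "?F / N = c N * ((ln N - ln 2) * ?F * ln 2)"
      using N4 lnN l2 by (simp add: c_def field_simps)
    finally have pr: "measure M (E i) \<le> c N * ((ln N - ln 2) * ?F * ln 2)" .
    have c0: "0 \<le> c N" using N4 lnN l2 by (simp add: c_def)
    have K0: "0 \<le> (ln N - ln 2) * ?F * ln 2" using lnN l2 by simp
    have fJ: "(\<lambda>y. f y * indicator (J N) y) \<in> borel_measurable lborel"
      unfolding J_def by measurable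
    have "ennreal (measure M (E i)) \<le> ennreal (c N) * ennreal ((ln N - ln 2) * ?F * ln 2)"
      using pr c0 K0 by (simp add: ennreal_mult'[symmetric] ennreal_leI)
    also have "\<dots> \<le> ennreal (c N) * (\<integral>\<^sup>+y. f y * indicator (J N) y \<partial>lborel)"
      by (intro mult_left_mono) (use cell_int_lower[OF ON gpos gmono eps N4] in \<open>simp_all add: f_def J_def\<close>)
    also have "\<dots> = (\<integral>\<^sup>+y. ennreal (c N) * (f y * indicator (J N) y) \<partial>lborel)"
      by (rule nn_integral_cmult[symmetric, OF fJ])
    also have "\<dots> = (\<integral>\<^sup>+y. w i y \<partial>lborel)"
      using True by (simp add: w_def i N_def)
    finally show ?thesis .
  qed
  have weight: "(\<integral>\<^sup>+i. ennreal (if i \<in> I then c (real (fst i * snd i)) else 0) * indicator (J (real (fst i * snd i))) y \<partial>count_space UNIV)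
      \<le> ennreal wconst" for y
  proof -
    define S where "S = {i \<in> I. y \<in> J (real (fst i * snd i))}"
    define u where "u = young_fenchel \<phi> y"
    have u0: "0 \<le> u" unfolding u_def by (rule yf_nonneg[OF ON])
    have Ssub: "S \<subseteq> {(k::nat, n::nat). 1 \<le> k \<and> 1 \<le> n \<and> 4 \<le> k * n \<and> exp u \<le> real (k * n) \<and> real (k * n) \<le> 2 * exp u}"
    proof
      fix i assume "i \<in> S"
      then obtain k n where i: "i = (k, n)" and kn: "1 \<le> k" "1 \<le> n" "4 \<le> k * n"
        and yJ: "y \<in> J (real (k * n))" by (cases i) (auto simp: S_def I_def)
      define N where "N = real (k * n)"
      have N4: "4 \<le> N" using kn(3) unfolding N_def by (metis of_nat_le_iff of_nat_numeral)
      have lnN: "ln 2 \<le> ln N" using N4 by simp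
      have L0: "0 \<le> ln N - ln 2" using lnN by simp
      have lnN0: "0 \<le> ln N" using lnN by (smt (verit) ln_ge_zero one_le_numeral)
      have l0: "0 \<le> inv_pos (young_fenchel \<phi>) (ln N - ln 2)" by (rule inv_pos_nonneg[OF ON L0])
      have y1: "inv_pos (young_fenchel \<phi>) (ln N - ln 2) \<le> y" and y2: "y \<le> inv_pos (young_fenchel \<phi>) (ln N)"
        using yJ by (auto simp: J_def N_def)
      have "young_fenchel \<phi> (inv_pos (young_fenchel \<phi>) (ln N - ln 2)) \<le> u"
        unfolding u_def by (rule yf_mono[OF ON l0 y1])
      then have ua: "ln N - ln 2 \<le> u" using yf_inv_pos[OF ON L0] by simp
      have "u \<le> young_fenchel \<phi> (inv_pos (young_fenchel \<phi>) (ln N))"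
        unfolding u_def by (rule yf_mono[OF ON _ y2]) (use l0 y1 in simp)
      then have ub: "u \<le> ln N" using yf_inv_pos[OF ON lnN0] by simp
      have N0: "0 < N" using N4 by simp
      have "exp u \<le> exp (ln N)" using ub by simp
      then have e1: "exp u \<le> N" using N0 by simp
      have "exp (ln N) \<le> exp (u + ln 2)" using ua by simp
      then have e2: "N \<le> 2 * exp u" using N0 by (simp add: exp_add mult.commute)
      show "i \<in> {(k::nat, n::nat). 1 \<le> k \<and> 1 \<le> n \<and> 4 \<le> k * n \<and> exp u \<le> real (k * n) \<and> real (k * n) \<le> 2 * exp u}"
        using kn e1 e2 by (simp add: i N_def)
    qed
    have finS: "finite S"
    proof (rule finite_subset[OF Ssub])
      have "{(k::nat, n::nat). 1 \<le> k \<and> 1 \<le> n \<and> 4 \<le> k * n \<and> exp u \<le> real (k * n) \<and> real (k * n) \<le> 2 * exp u}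
          \<subseteq> {(k::nat, n::nat). 1 \<le> k \<and> 1 \<le> n \<and> real (k * n) \<le> 2 * exp u}" by auto
      moreover have "finite {(k::nat, n::nat). 1 \<le> k \<and> 1 \<le> n \<and> real (k * n) \<le> 2 * exp u}"
      proof (rule count_hyper(2))
        have "1 \<le> exp u" using u0 by simp
        then show "1 \<le> 2 * exp u" by linarith
      qed
      ultimately show "finite {(k::nat, n::nat). 1 \<le> k \<and> 1 \<le> n \<and> 4 \<le> k * n \<and> exp u \<le> real (k * n) \<and> real (k * n) \<le> 2 * exp u}"
        using finite_subset by blast
    qed
    have cpos: "0 \<le> c (real (fst i * snd i))" if "i \<in> I" for i
    proof -
      obtain k n where i: "i = (k, n)" by (cases i)
      have "4 \<le> k * n" using that by (simp add: I_def i)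
      then have N4: "4 \<le> real (k * n)" by (metis of_nat_le_iff of_nat_numeral)
      then have "ln 2 \<le> ln (real (k * n))" by simp
      then show ?thesis using N4 by (simp add: c_def i)
    qed
    have "(\<integral>\<^sup>+i. ennreal (if i \<in> I then c (real (fst i * snd i)) else 0) * indicator (J (real (fst i * snd i))) y \<partial>count_space UNIV)
        = (\<integral>\<^sup>+i. ennreal (if i \<in> I then c (real (fst i * snd i)) else 0) * indicator (J (real (fst i * snd i))) y \<partial>count_space S)"
      by (rule nn_integral_count_space_eq) (auto simp: S_def indicator_def)
    also have "\<dots> = (\<Sum>i\<in>S. ennreal (if i \<in> I then c (real (fst i * snd i)) else 0) * indicator (J (real (fst i * snd i))) y)"
      by (rule nn_integral_count_space_finite[OF finS])
    also have "\<dots> = (\<Sum>i\<in>S. ennreal (c (real (fst i * snd i))))"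
      by (rule sum.cong) (auto simp: S_def indicator_def)
    also have "\<dots> = ennreal (\<Sum>i\<in>S. c (real (fst i * snd i)))"
      by (rule sum_ennreal) (use cpos in \<open>auto simp: S_def\<close>)
    also have "(\<Sum>i\<in>S. c (real (fst i * snd i))) = (\<Sum>(k, n)\<in>S. 1 / (real (k * n) * ln 2 * (ln (real (k * n)) - ln 2)))"
      by (rule sum.cong) (auto simp: c_def)
    also have "\<dots> \<le> wconst" by (rule weight_bound[OF u0 Ssub])
    finally show ?thesis by (simp add: ennreal_leI)
  qed
  have wc0: "0 \<le> wconst" by (simp add: wconst_def)
  have sum_fin: "(\<integral>\<^sup>+i. ennreal (measure M (E i)) \<partial>count_space UNIV) < \<infinity>"
  proof -
    have "(\<integral>\<^sup>+i. ennreal (measure M (E i)) \<partial>count_space UNIV) \<le> (\<integral>\<^sup>+i. (\<integral>\<^sup>+y. w i y \<partial>lborel) \<partial>count_space UNIV)"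
      by (rule nn_integral_mono) (rule cell)
    also have "\<dots> = (\<integral>\<^sup>+y. (\<integral>\<^sup>+i. w i y \<partial>count_space UNIV) \<partial>lborel)"
      by (rule nn_integral_count_space_nn_integral[symmetric]) (simp_all add: wmeas)
    also have "\<dots> \<le> (\<integral>\<^sup>+y. f y * ennreal wconst \<partial>lborel)"
    proof (rule nn_integral_mono)
      fix y
      have "(\<integral>\<^sup>+i. w i y \<partial>count_space UNIV) = (\<integral>\<^sup>+i. f y * (ennreal (if i \<in> I then c (real (fst i * snd i)) else 0) * indicator (J (real (fst i * snd i))) y) \<partial>count_space UNIV)"
        by (rule nn_integral_cong) (simp add: w_def mult.left_commute)
      also have "\<dots> = f y * (\<integral>\<^sup>+i. ennreal (if i \<in> I then c (real (fst i * snd i)) else 0) * indicator (J (real (fst i * snd i))) y \<partial>count_space UNIV)"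
        by (rule nn_integral_cmult) simp
      also have "\<dots> \<le> f y * ennreal wconst"
        by (intro mult_left_mono weight) simp
      finally show "(\<integral>\<^sup>+i. w i y \<partial>count_space UNIV) \<le> f y * ennreal wconst" .
    qed
    also have "\<dots> = (\<integral>\<^sup>+y. ennreal wconst * f y \<partial>lborel)"
      by (simp add: mult.commute)
    also have "\<dots> = ennreal wconst * integral\<^sup>N lborel f"
      by (rule nn_integral_cmult) (use fmeas in simp)
    also have "\<dots> < \<infinity>" using intf by (simp add: ennreal_mult_less_top)
    finally show ?thesis .
  qed
  define A where "A m = E (prod_decode m)" for m
  have Ameas: "A m \<in> sets M" for m by (simp add: A_def)
  have "(\<Sum>m. ennreal (measure M (A m))) = (\<integral>\<^sup>+m. ennreal (measure M (E (prod_decode m))) \<partial>count_space UNIV)"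
    by (simp add: A_def nn_integral_count_space_nat)
  also have "\<dots> = (\<integral>\<^sup>+i. ennreal (measure M (E i)) \<partial>count_space UNIV)"
    by (rule nn_integral_bij_count_space[OF bij_prod_decode])
  finally have "(\<Sum>m. ennreal (measure M (A m))) \<noteq> \<top>" using sum_fin by simp
  then have summ: "summable (\<lambda>m. measure M (A m))"
    by (rule summable_suminf_not_top[rotated]) simp
  have bc: "AE x in M. eventually (\<lambda>m. x \<in> space M - A m) sequentially"
    by (rule borel_cantelli_AE1[OF Ameas _ summ]) (simp add: emeasure_eq_measure)
  show ?thesis
    using bc AE_space
  proof eventually_elim
    case (elim x)
    then obtain m0 where m0: "\<And>m. m \<ge> m0 \<Longrightarrow> x \<notin> A m"
      by (auto simp: eventually_sequentially)
    have "{(k, n). 1 \<le> k \<and> 1 \<le> n \<and> 4 \<le> k * n \<and>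
            g (ln (real (k * n))) * inv_pos (young_fenchel \<phi>) (ln (real (k * n))) + \<epsilon> < X k n x}
        \<subseteq> prod_decode ` {..<m0}"
    proof
      fix i assume iB: "i \<in> {(k, n). 1 \<le> k \<and> 1 \<le> n \<and> 4 \<le> k * n \<and>
            g (ln (real (k * n))) * inv_pos (young_fenchel \<phi>) (ln (real (k * n))) + \<epsilon> < X k n x}"
      then have "x \<in> E i" using elim by (cases i) (auto simp: E_def I_def)
      then have "x \<in> A (prod_encode i)" by (simp add: A_def)
      then have "prod_encode i < m0" using m0 not_le by blast
      then show "i \<in> prod_decode ` {..<m0}"
        by (metis lessThan_iff prod_encode_inverse rev_image_eqI)
    qed
    then show ?case by (rule finite_subset) simp
  qed
qed

theorem theorem1:
  fixes M :: "'a measure" and \<phi> g :: "real \<Rightarrow> real"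
    and X :: "nat \<Rightarrow> nat \<Rightarrow> 'a \<Rightarrow> real"
  assumes "prob_space M"
    and "orlicz_N \<phi>"
    and "\<And>k n. k \<ge> 1 \<Longrightarrow> n \<ge> 1 \<Longrightarrow> phi_subgaussian M \<phi> (X k n)"
    and "\<And>x. x \<ge> 0 \<Longrightarrow> g x > 0"
    and "mono_on {0..} g"
    and "\<And>k n. k \<ge> 1 \<Longrightarrow> n \<ge> 1 \<Longrightarrow>
           tau_phi M \<phi> (X k n) \<le> g (ln (real (k * n)))"
    and "\<exists>\<epsilon>0>0. \<forall>\<epsilon>. 0 < \<epsilon> \<and> \<epsilon> \<le> \<epsilon>0 \<longrightarrow>
           (\<integral>\<^sup>+ x \<in> {0..}. ennreal (young_fenchel \<phi> x * orlicz_q \<phi> x *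
               exp (- \<epsilon> * orlicz_q \<phi> x / g (young_fenchel \<phi> x + ln 2))) \<partial>lborel) < \<infinity>"
  shows "AE \<omega> in M. \<forall>e>0. \<exists>N. \<forall>m j. m \<ge> 1 \<and> j \<ge> 1 \<and> max m j \<ge> N \<longrightarrow>
           \<bar>max (Max {X k n \<omega> | k n. 1 \<le> k \<and> k \<le> m \<and> 1 \<le> n \<and> n \<le> j}
                 - g (ln (real (m * j))) * inv_pos (young_fenchel \<phi>) (ln (real (m * j)))) 0\<bar> < e"
proof -
  note P = assms(1) and ON = assms(2) and SG = assms(3) and gpos = assms(4) and gmono = assms(5)
    and tau = assms(6)
  obtain \<epsilon>0 where e0: "\<epsilon>0 > 0" and intH: "\<And>\<epsilon>. 0 < \<epsilon> \<Longrightarrow> \<epsilon> \<le> \<epsilon>0 \<Longrightarrow>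
           (\<integral>\<^sup>+ x \<in> {0..}. ennreal (young_fenchel \<phi> x * orlicz_q \<phi> x *
               exp (- \<epsilon> * orlicz_q \<phi> x / g (young_fenchel \<phi> x + ln 2))) \<partial>lborel) < \<infinity>"
    using assms(7) by blast
  define a where "a N = g (ln N) * inv_pos (young_fenchel \<phi>) (ln N)" for N :: real
  define er where "er r = \<epsilon>0 / (real r + 1)" for r :: nat
  have er0: "0 < er r" for r using e0 by (simp add: er_def)
  have erle: "er r \<le> \<epsilon>0" for r using e0 by (simp add: er_def divide_le_eq)
  define B where "B r \<omega> = {(k, n). 1 \<le> k \<and> 1 \<le> n \<and> 4 \<le> k * n \<and>
            g (ln (real (k * n))) * inv_pos (young_fenchel \<phi>) (ln (real (k * n))) + er r < X k n \<omega>}" for r \<omega>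
  have "\<forall>r. AE \<omega> in M. finite (B r \<omega>)"
  proof
    fix r
    show "AE \<omega> in M. finite (B r \<omega>)"
      unfolding B_def by (rule bc_main[OF P ON SG gpos gmono tau er0 intH[OF er0 erle]])
  qed
  then have AEall: "AE \<omega> in M. \<forall>r. finite (B r \<omega>)" by (simp add: AE_all_countable)
  have amono: "a N1 \<le> a N2" if "1 \<le> N1" "N1 \<le> N2" for N1 N2
  proof -
    have l1: "0 \<le> ln N1" using that by simp
    have l12: "ln N1 \<le> ln N2" using that by simp
    have "g (ln N1) \<le> g (ln N2)" by (rule mono_onD[OF gmono]) (use l1 l12 in auto)
    moreover have "inv_pos (young_fenchel \<phi>) (ln N1) \<le> inv_pos (young_fenchel \<phi>) (ln N2)"
      by (rule inv_pos_mono[OF ON l1 l12])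
    moreover have "0 \<le> inv_pos (young_fenchel \<phi>) (ln N1)" by (rule inv_pos_nonneg[OF ON l1])
    moreover have "0 \<le> g (ln N2)" using gpos[of "ln N2"] l1 l12 by simp
    ultimately show ?thesis unfolding a_def by (intro mult_mono) auto
  qed
  show ?thesis
    using AEall
  proof (rule eventually_mono)
    fix \<omega> assume fin: "\<forall>r. finite (B r \<omega>)"
    show "\<forall>e>0. \<exists>N. \<forall>m j. m \<ge> 1 \<and> j \<ge> 1 \<and> max m j \<ge> N \<longrightarrow>
           \<bar>max (Max {X k n \<omega> | k n. 1 \<le> k \<and> k \<le> m \<and> 1 \<le> n \<and> n \<le> j}
                 - g (ln (real (m * j))) * inv_pos (young_fenchel \<phi>) (ln (real (m * j)))) 0\<bar> < e"
    proof (intro allI impI)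
      fix e :: real assume e: "e > 0"
      obtain r :: nat where r: "\<epsilon>0 / e < real r" using reals_Archimedean2 by blast
      have ere: "er r < e"
      proof -
        have "\<epsilon>0 < e * real r" using r e by (simp add: divide_less_eq mult.commute)
        also have "\<dots> < e * (real r + 1)" using e by simp
        finally show ?thesis using e by (simp add: er_def divide_less_eq mult.commute)
      qed
      define F where "F = B r \<omega> \<union> ({1..3} \<times> {1..3})"
      have finF: "finite F" using fin by (simp add: F_def)
      have neF: "F \<noteq> {}" by (auto simp: F_def)
      define Bd where "Bd = Max ((\<lambda>(k, n). X k n \<omega>) ` F)"
      have Bd: "X k n \<omega> \<le> Bd" if "(k, n) \<in> F" for k n
        unfolding Bd_def using finF that by (intro Max_ge) force+
      define R where "R = max 0 (Bd / g 0)"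
      have R0: "0 \<le> R" by (simp add: R_def)
      have g0: "0 < g 0" using gpos by simp
      obtain N :: nat where N: "exp (young_fenchel \<phi> R) < real N" using reals_Archimedean2 by blast
      show "\<exists>N. \<forall>m j. m \<ge> 1 \<and> j \<ge> 1 \<and> max m j \<ge> N \<longrightarrow>
           \<bar>max (Max {X k n \<omega> | k n. 1 \<le> k \<and> k \<le> m \<and> 1 \<le> n \<and> n \<le> j}
                 - g (ln (real (m * j))) * inv_pos (young_fenchel \<phi>) (ln (real (m * j)))) 0\<bar> < e"
      proof (intro exI[of _ N] allI impI)
        fix m j :: nat assume mj: "m \<ge> 1 \<and> j \<ge> 1 \<and> max m j \<ge> N"
        define Pmj where "Pmj = real (m * j)"
        have "max m j \<le> m * j" using mj by (auto simp: max_def)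
        then have NP: "real N \<le> Pmj" using mj unfolding Pmj_def by linarith
        have mj1: "1 \<le> m * j" using mj by (simp add: Suc_le_eq)
        have P1: "1 \<le> Pmj" unfolding Pmj_def using mj1 by (metis of_nat_1 of_nat_le_iff)
        have Npos: "0 < real N" using N by (smt (verit) exp_gt_zero)
        have "ln (exp (young_fenchel \<phi> R)) < ln (real N)" using N Npos by (subst ln_less_cancel_iff) auto
        then have "young_fenchel \<phi> R < ln (real N)" by simp
        also have "\<dots> \<le> ln Pmj" using NP Npos by simp
        finally have "R < inv_pos (young_fenchel \<phi>) (ln Pmj)" by (rule inv_pos_big[OF ON R0])
        moreover have lP: "0 \<le> ln Pmj" using P1 by simp
        have gP: "g 0 \<le> g (ln Pmj)" by (rule mono_onD[OF gmono]) (use lP in auto)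
        have aP0: "0 \<le> a Pmj" using gpos[OF lP] inv_pos_nonneg[OF ON lP] by (simp add: a_def)
        have BdP: "Bd \<le> a Pmj"
        proof (cases "Bd \<le> 0")
          case True then show ?thesis using aP0 by simp
        next
          case False
          have "Bd = g 0 * (Bd / g 0)" using g0 by simp
          also have "\<dots> \<le> g 0 * inv_pos (young_fenchel \<phi>) (ln Pmj)"
            using calculation \<open>R < _\<close> g0 by (intro mult_left_mono) (auto simp: R_def)
          also have "\<dots> \<le> g (ln Pmj) * inv_pos (young_fenchel \<phi>) (ln Pmj)"
            using gP inv_pos_nonneg[OF ON lP] by (intro mult_right_mono) auto
          finally show ?thesis by (simp add: a_def)
        qed
        have cellle: "X k n \<omega> \<le> a Pmj + er r" if kn: "1 \<le> k" "k \<le> m" "1 \<le> n" "n \<le> j" for k n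
        proof (cases "(k, n) \<in> F")
          case True
          then show ?thesis using Bd[OF True] BdP er0[of r] by simp
        next
          case False
          then have nB: "(k, n) \<notin> B r \<omega>" and big: "\<not> (k \<le> 3 \<and> n \<le> 3)" using kn by (auto simp: F_def)
          have "4 \<le> k * n"
          proof (cases "k \<le> 3")
            case True
            then have "4 \<le> n" using big by simp
            then show ?thesis using kn(1) by (metis mult_1 mult_le_mono)
          next
            case False
            then have "4 \<le> k" by simp
            then show ?thesis using kn(3) by (metis mult.right_neutral mult_le_mono)
          qed
          then have "\<not> (a (real (k * n)) + er r < X k n \<omega>)"
            using nB kn by (simp add: B_def a_def)
          then have "X k n \<omega> \<le> a (real (k * n)) + er r" by simp
          moreover have "a (real (k * n)) \<le> a Pmj"
          proof (rule amono)
            have "1 \<le> k * n" using kn by (simp add: Suc_le_eq)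
            then show "1 \<le> real (k * n)" by (metis of_nat_1 of_nat_le_iff)
            have "k * n \<le> m * j" using kn by (simp add: mult_le_mono)
            then show "real (k * n) \<le> Pmj" unfolding Pmj_def by (simp only: of_nat_le_iff)
          qed
          ultimately show ?thesis by simp
        qed
        have setEq: "{X k n \<omega> | k n. 1 \<le> k \<and> k \<le> m \<and> 1 \<le> n \<and> n \<le> j} = (\<lambda>(k, n). X k n \<omega>) ` ({1..m} \<times> {1..j})"
          by auto blast
        have "Max {X k n \<omega> | k n. 1 \<le> k \<and> k \<le> m \<and> 1 \<le> n \<and> n \<le> j} \<le> a Pmj + er r"
          unfolding setEq using mj by (subst Max_le_iff) (auto intro: cellle)
        then have "Max {X k n \<omega> | k n. 1 \<le> k \<and> k \<le> m \<and> 1 \<le> n \<and> n \<le> j}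
                 - g (ln (real (m * j))) * inv_pos (young_fenchel \<phi>) (ln (real (m * j))) < e"
          using ere by (simp add: a_def Pmj_def)
        then show "\<bar>max (Max {X k n \<omega> | k n. 1 \<le> k \<and> k \<le> m \<and> 1 \<le> n \<and> n \<le> j}
                 - g (ln (real (m * j))) * inv_pos (young_fenchel \<phi>) (ln (real (m * j)))) 0\<bar> < e"
          using e by simp
      qed
    qed
  qed
qed

end
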